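(* Fix a point $X\in\mathbb{P}^3$ and a line $L\subseteq\mathbb{P}^3$, and let $\mathcal{C}=(C_1,\ldots,C_m)$ be a generic camera arrangement. For $i\ne j$ let $F^{ij}$ be the fundamental matrix of the pair $C_i,C_j$. (1) For $x=(x_1,\ldots,x_m)\in(\mathbb{P}^2)^m$: $x\in\mathcal{M}_\mathcal{C}^L$ if and only if $x_1^TF^{1j}x_j=0$ for every $j=2,\ldots,m$ and $x_i^T(C_i\cdot L)=0$ for every $i=1,\ldots,m$. (2) For $\ell=(\ell_1,\ldots,\ell_m)\in(\mathbb{P}^2)^m$: $\ell\in\mathcal{L}_\mathcal{C}^X$ if and only if $$\det\begin{bmatrix}C_1^T\ell_1 & C_2^T\ell_2 & C_i^T\ell_i\end{bmatrix}=0\quad\text{and}\quad \det\begin{bmatrix}C_1^T\ell_1 & C_3^T\ell_3 & C_i^T\ell_i\end{bmatrix}=0$$ for each $i=3,\ldots,m$, and $\ell_i^TC_iX=0$ for every $i=1,\ldots,m$.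
   Context: All spaces are complex projective. A camera is a full-rank $3\times4$ complex matrix $C:\mathbb{P}^3\dashrightarrow\mathbb{P}^2$ with center its kernel; a camera arrangement $\mathcal{C}=(C_1,\ldots,C_m)$, $m\ge2$, has pairwise distinct centers. The determinant conditions are on $4\times 3$ matrices and mean the rank is less than 3 (i.e. the columns are linearly dependent); equivalently, the maximal minors vanish. For a line $L$ spanned by $u,v$, $C\cdot L:=Cu\times Cv\in\mathbb{P}^2$. $\mathcal{M}_\mathcal{C}^L$ is the Zariski closure of the image of $L\ni Y\mapsto(C_1Y,\ldots,C_mY)$; $\mathcal{L}_\mathcal{C}^X$ is the Zariski closure of the image of $\Lambda(X)\ni L'\mapsto(C_1\cdot L',\ldots,C_m\cdot L')$, where $\Lambda(X)$ is the set of lines through $X$. "Generic" means for all camera arrangements outside a proper Zariski closed subset. *)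

theory Defs
  imports "HOL-Analysis.Analysis"
begin

text \<open>Points of complex projective space are represented by nonzero vectors of
  complex^3 resp. complex^4 (homogeneous coordinates).  All conditions below are
  homogeneous in each representative.  Cameras are indexed 0..m-1 (paper: 1..m).\<close>

definition tdot :: "complex^'n \<Rightarrow> complex^'n \<Rightarrow> complex" where
  "tdot x y = (\<Sum>k\<in>UNIV. x $ k * y $ k)"

definition cross3c :: "complex^3 \<Rightarrow> complex^3 \<Rightarrow> complex^3" where
  "cross3c x y = (\<chi> i. x $ (i+1) * y $ (i+2) - x $ (i+2) * y $ (i+1))"

definition camera :: "complex^4^3 \<Rightarrow> bool" where
  "camera C \<longleftrightarrow> rank C = 3"

definition center :: "complex^4^3 \<Rightarrow> (complex^4) set" where
  "center C = {Y. C *v Y = 0}"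

definition camera_arrangement :: "nat \<Rightarrow> (nat \<Rightarrow> complex^4^3) \<Rightarrow> bool" where
  "camera_arrangement m C \<longleftrightarrow> m \<ge> 2 \<and> (\<forall>i<m. camera (C i)) \<and>
     (\<forall>i<m. \<forall>j<m. i \<noteq> j \<longrightarrow> center (C i) \<noteq> center (C j))"

text \<open>C . L := C u \<times> C v for the line spanned by u, v.\<close>
definition cam_line :: "complex^4^3 \<Rightarrow> complex^4 \<Rightarrow> complex^4 \<Rightarrow> complex^3" where
  "cam_line C u v = cross3c (C *v u) (C *v v)"

definition lin_indep2 :: "complex^4 \<Rightarrow> complex^4 \<Rightarrow> bool" where
  "lin_indep2 u v \<longleftrightarrow> (\<forall>a b. a *s u + b *s v = 0 \<longrightarrow> a = 0 \<and> b = 0)"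

definition in_span2 :: "complex^4 \<Rightarrow> complex^4 \<Rightarrow> complex^4 \<Rightarrow> bool" where
  "in_span2 Y u v \<longleftrightarrow> (\<exists>a b. Y = a *s u + b *s v)"

text \<open>Fundamental matrix of the pair (A, B) (Hartley--Zisserman (17.3)):
  F_kl = (-1)^(k+l) det [A without row k; B without row l], written with cyclic
  row order, so that x^T F y = 0 is the epipolar constraint for x in image A, y in image B.\<close>
definition fundamental :: "complex^4^3 \<Rightarrow> complex^4^3 \<Rightarrow> complex^3^3" where
  "fundamental A B = (\<chi> k l. det (\<chi> r::4. if r = 1 then A $ (k+1) else if r = 2 then A $ (k+2)
       else if r = 3 then B $ (l+1) else B $ (l+2)))"

text \<open>Columns of a 4x3 matrix [a b c] are linearly dependent (rank < 3).\<close>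
definition cols_dependent3 :: "complex^4 \<Rightarrow> complex^4 \<Rightarrow> complex^4 \<Rightarrow> bool" where
  "cols_dependent3 a b c \<longleftrightarrow>
     (\<exists>s t w. (s, t, w) \<noteq> (0, 0, 0) \<and> s *s a + t *s b + w *s c = 0)"

inductive_set polyfun :: "('a \<Rightarrow> complex) set \<Rightarrow> ('a \<Rightarrow> complex) set" for V where
  const: "(\<lambda>_. c) \<in> polyfun V"
| var: "f \<in> V \<Longrightarrow> f \<in> polyfun V"
| add: "p \<in> polyfun V \<Longrightarrow> q \<in> polyfun V \<Longrightarrow> (\<lambda>z. p z + q z) \<in> polyfun V"
| mult: "p \<in> polyfun V \<Longrightarrow> q \<in> polyfun V \<Longrightarrow> (\<lambda>z. p z * q z) \<in> polyfun V"

definition zclosure :: "('a \<Rightarrow> complex) set \<Rightarrow> 'a set \<Rightarrow> 'a set" where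
  "zclosure V S = {z. \<forall>p\<in>polyfun V. (\<forall>y\<in>S. p y = 0) \<longrightarrow> p z = 0}"

definition zariski_closed :: "('a \<Rightarrow> complex) set \<Rightarrow> 'a set \<Rightarrow> bool" where
  "zariski_closed V Z \<longleftrightarrow> (\<exists>P \<subseteq> polyfun V. Z = {z. \<forall>p\<in>P. p z = 0})"

definition cam_coords :: "nat \<Rightarrow> ((nat \<Rightarrow> complex^4^3) \<Rightarrow> complex) set" where
  "cam_coords m = {(\<lambda>C. C i $ r $ c) | i r c. i < m}"

definition img_coords :: "nat \<Rightarrow> ((nat \<Rightarrow> complex^3) \<Rightarrow> complex) set" where
  "img_coords m = {(\<lambda>x. x i $ r) | i r. i < m}"

definition generic_arr :: "nat \<Rightarrow> ((nat \<Rightarrow> complex^4^3) \<Rightarrow> bool) \<Rightarrow> bool" where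
  "generic_arr m P \<longleftrightarrow> (\<exists>Z. zariski_closed (cam_coords m) Z \<and> Z \<noteq> UNIV \<and>
      (\<forall>C. camera_arrangement m C \<and> C \<notin> Z \<longrightarrow> P C))"

text \<open>Multiprojective Zariski closure in (P^2)^m, via the multi-cone of representatives:
  a tuple of nonzero representatives lies in the closure of S \<subseteq> (P^2)^m iff it lies in the
  affine Zariski closure of the multi-cone over S.\<close>
definition multiproj_closure :: "nat \<Rightarrow> (nat \<Rightarrow> complex^3) set \<Rightarrow> (nat \<Rightarrow> complex^3) set" where
  "multiproj_closure m S = {x. (\<forall>i<m. x i \<noteq> 0) \<and> x \<in> zclosure (img_coords m) S}"

text \<open>Multi-cone of the image of L \<ni> Y \<mapsto> (C_1 Y, ..., C_m Y), L = span{u,v}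
  (the rational map is defined where no C_i Y vanishes).\<close>
definition point_image_cone :: "nat \<Rightarrow> (nat \<Rightarrow> complex^4^3) \<Rightarrow> complex^4 \<Rightarrow> complex^4 \<Rightarrow> (nat \<Rightarrow> complex^3) set" where
  "point_image_cone m C u v = {x. \<exists>Y. in_span2 Y u v \<and> Y \<noteq> 0 \<and>
      (\<forall>i<m. C i *v Y \<noteq> 0 \<and> (\<exists>c. c \<noteq> 0 \<and> x i = c *s (C i *v Y)))}"

definition M_L :: "nat \<Rightarrow> (nat \<Rightarrow> complex^4^3) \<Rightarrow> complex^4 \<Rightarrow> complex^4 \<Rightarrow> (nat \<Rightarrow> complex^3) set" where
  "M_L m C u v = multiproj_closure m (point_image_cone m C u v)"

text \<open>Multi-cone of the image of \<Lambda>(X) \<ni> L' \<mapsto> (C_1.L', ..., C_m.L').\<close>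
definition line_image_cone :: "nat \<Rightarrow> (nat \<Rightarrow> complex^4^3) \<Rightarrow> complex^4 \<Rightarrow> (nat \<Rightarrow> complex^3) set" where
  "line_image_cone m C X = {l. \<exists>u v. lin_indep2 u v \<and> in_span2 X u v \<and>
      (\<forall>i<m. cam_line (C i) u v \<noteq> 0 \<and> (\<exists>c. c \<noteq> 0 \<and> l i = c *s cam_line (C i) u v))}"

definition L_X :: "nat \<Rightarrow> (nat \<Rightarrow> complex^4^3) \<Rightarrow> complex^4 \<Rightarrow> (nat \<Rightarrow> complex^3) set" where
  "L_X m C X = multiproj_closure m (line_image_cone m C X)"

end

theory Submission
  imports Defs "HOL-Computational_Algebra.Polynomial"
begin


lemma det_4:
  "det (A::'a::comm_ring_1^4^4) = A$1$1 * A$2$2 * A$3$3 * A$4$4 - A$1$1 * A$2$2 * A$3$4 * A$4$3 - A$1$1 * A$2$3 * A$3$2 * A$4$4 + A$1$1 * A$2$3 * A$3$4 * A$4$2 + A$1$1 * A$2$4 * A$3$2 * A$4$3 - A$1$1 * A$2$4 * A$3$3 * A$4$2 - A$1$2 * A$2$1 * A$3$3 * A$4$4 + A$1$2 * A$2$1 * A$3$4 * A$4$3 + A$1$2 * A$2$3 * A$3$1 * A$4$4 - A$1$2 * A$2$3 * A$3$4 * A$4$1 - A$1$2 * A$2$4 * A$3$1 * A$4$3 + A$1$2 * A$2$4 * A$3$3 * A$4$1 + A$1$3 * A$2$1 * A$3$2 * A$4$4 - A$1$3 * A$2$1 * A$3$4 * A$4$2 - A$1$3 * A$2$2 * A$3$1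 * A$4$4 + A$1$3 * A$2$2 * A$3$4 * A$4$1 + A$1$3 * A$2$4 * A$3$1 * A$4$2 - A$1$3 * A$2$4 * A$3$2 * A$4$1 - A$1$4 * A$2$1 * A$3$2 * A$4$3 + A$1$4 * A$2$1 * A$3$3 * A$4$2 + A$1$4 * A$2$2 * A$3$1 * A$4$3 - A$1$4 * A$2$2 * A$3$3 * A$4$1 - A$1$4 * A$2$3 * A$3$1 * A$4$2 + A$1$4 * A$2$3 * A$3$2 * A$4$1"
proof -
  have f1: "finite {2::4, 3, 4}" "1 \<notin> {2::4, 3, 4}" by auto
  have f2: "finite {3::4, 4}" "2 \<notin> {3::4, 4}" by auto
  have f3: "finite {4::4}" "3 \<notin> {4::4}" by auto
  show ?thesis
    unfolding det_def UNIV_4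
    unfolding sum_over_permutations_insert[OF f1]
    unfolding sum_over_permutations_insert[OF f2]
    unfolding sum_over_permutations_insert[OF f3]
    unfolding permutes_sing
    by (simp add: sign_swap_id permutation_swap_id permutation_compose sign_compose sign_id swap_id_eq algebra_simps)
qed
definition det4 :: "complex^4 \<Rightarrow> complex^4 \<Rightarrow> complex^4 \<Rightarrow> complex^4 \<Rightarrow> complex" where
  "det4 a b c d = det (\<chi> r::4. if r = 1 then a else if r = 2 then b else if r = 3 then c else d)"
definition cen :: "complex^4^3 \<Rightarrow> complex^4" where
  "cen C = (\<chi> j. det4 (C$1) (C$2) (C$3) (axis j 1))"

lemma det4_expand: "det4 a b c d = a$1 * b$2 * c$3 * d$4 - a$1 * b$2 * c$4 * d$3 - a$1 * b$3 * c$2 * d$4 + a$1 * b$3 * c$4 * d$2 + a$1 * b$4 * c$2 * d$3 - a$1 * b$4 * c$3 * d$2 - a$2 * b$1 * c$3 * d$4 + a$2 * b$1 * c$4 * d$3 + a$2 * b$3 * c$1 * d$4 - a$2 * b$3 * c$4 * d$1 - a$2 * b$4 * c$1 * d$3 + a$2 * b$4 * c$3 * d$1 + a$3 * b$1 * c$2 * d$4 - a$3 * b$1 * c$4 * d$2 - a$3 * b$2 * c$1 * d$4 + a$3 * b$2 * c$4 * d$1 + a$3 * b$4 * c$1 * d$2 - a$3 * b$4 * c$2 * d$1 - a$4 * b$1 * c$2 * d$3 + a$4 * b$1 * c$3 * d$2 + a$4 * b$2 * c$1 * d$3 - a$4 * b$2 * c$3 * d$1 - a$4 * b$3 * c$1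 * d$2 + a$4 * b$3 * c$2 * d$1"
  unfolding det4_def det_4 by simp

lemma fund_entries:
  "fundamental A B $ k $ l = det4 (A$(k+1)) (A$(k+2)) (B$(l+1)) (B$(l+2))"
  unfolding fundamental_def det4_def by simp

lemma three_add: "(1::3) + 1 = 2" "(1::3)+2 = 3" "(2::3)+1 = 3" "(2::3)+2 = 1" "(3::3)+1 = 1" "(3::3)+2 = 2"
  by simp_all

lemma three_num: "(4::3) = 1" "(5::3) = 2" "(6::3) = 3" by simp_all

lemma epi: "tdot (A *v Y) (fundamental A B *v (B *v W)) = det4 (cen A) Y (cen B) W"
  unfolding tdot_def matrix_vector_mult_def sum_3 sum_4 fund_entries three_add cen_def
  by (simp add: det4_expand axis_def sum_4 sum_3 three_add three_num) algebra




lemma tdot_3: "tdot (x::complex^3) y = x$1*y$1 + x$2*y$2 + x$3*y$3"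
  by (simp add: tdot_def sum_3)
lemma tdot_4: "tdot (x::complex^4) y = x$1*y$1 + x$2*y$2 + x$3*y$3 + x$4*y$4"
  by (simp add: tdot_def sum_4)
lemma cross_comp: "cross3c x y $ 1 = x$2*y$3 - x$3*y$2" "cross3c x y $ 2 = x$3*y$1 - x$1*y$3"
  "cross3c x y $ 3 = x$1*y$2 - x$2*y$1"
  by (simp_all add: cross3c_def three_num)
lemma tdot_comm: "tdot x y = tdot y x"
  by (simp add: tdot_def mult.commute)
lemma tdot_lin1: "tdot (a *s x + b *s y) z = a * tdot x z + b * tdot y z"
  by (simp add: tdot_def sum_distrib_left sum.distrib algebra_simps)
lemma tdot_lin2: "tdot z (a *s x + b *s y) = a * tdot z x + b * tdot z y"
  by (simp add: tdot_def sum_distrib_left sum.distrib algebra_simps)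
lemma tdot_scale1: "tdot (a *s x) z = a * tdot x z"
  by (simp add: tdot_def sum_distrib_left algebra_simps)
lemma tdot_scale2: "tdot z (a *s x) = a * tdot z x"
  by (simp add: tdot_def sum_distrib_left algebra_simps)
lemma tdot_add1: "tdot (x + y) z = tdot x z + tdot y z"
  by (simp add: tdot_def sum.distrib algebra_simps)
lemma tdot_add2: "tdot z (x + y) = tdot z x + tdot z y"
  by (simp add: tdot_def sum.distrib algebra_simps)
lemma tdot_zero[simp]: "tdot 0 z = 0" "tdot z 0 = 0"
  by (simp_all add: tdot_def)
lemma tdot_transpose: "tdot l (C *v Y) = tdot (transpose C *v l) Y"
  unfolding tdot_def matrix_vector_mult_def transpose_def
  by (simp add: sum_distrib_left sum_distrib_right mult.assoc mult.left_commute)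
     (rule sum.swap)
lemma cross_self: "tdot (cross3c p q) p = 0" "tdot (cross3c p q) q = 0"
  by (simp_all add: tdot_3 cross_comp algebra_simps)
lemma bac_cab: "cross3c a (cross3c b c) = tdot a c *s b - tdot a b *s c"
  by (simp add: vec_eq_iff forall_3 cross_comp tdot_3 algebra_simps)
lemma cross_lin1: "cross3c (a *s p + b *s q) w = a *s cross3c p w + b *s cross3c q w"
  by (simp add: vec_eq_iff forall_3 cross_comp algebra_simps)
lemma cross_lin2: "cross3c w (a *s p + b *s q) = a *s cross3c w p + b *s cross3c w q"
  by (simp add: vec_eq_iff forall_3 cross_comp algebra_simps)
lemma cross_add2: "cross3c p (q + t *s w) = cross3c p q + t *s cross3c p w"
  by (simp add: vec_eq_iff forall_3 cross_comp algebra_simps)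
lemma cross_scale1: "cross3c (a *s p) w = a *s cross3c p w"
  by (simp add: vec_eq_iff forall_3 cross_comp algebra_simps)
lemma cross_scale2: "cross3c w (a *s p) = a *s cross3c w p"
  by (simp add: vec_eq_iff forall_3 cross_comp algebra_simps)
lemma cross_same: "cross3c p p = 0"
  by (simp add: vec_eq_iff forall_3 cross_comp algebra_simps)
lemma cross_zero[simp]: "cross3c 0 p = 0" "cross3c p 0 = 0"
  by (simp_all add: vec_eq_iff forall_3 cross_comp)

lemma dual3: "tdot (cross3c p q) r *s l = tdot l p *s cross3c q r + tdot l q *s cross3c r p + tdot l r *s cross3c p q"
  by (simp add: vec_eq_iff forall_3 cross_comp tdot_3 algebra_simps)
lemma cramer3: "tdot (cross3c p q) r *s x = tdot (cross3c x q) r *s p + tdot (cross3c p x) r *s q + tdot (cross3c p q) x *s r"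
  by (simp add: vec_eq_iff forall_3 cross_comp tdot_3 algebra_simps)

lemma vec4_eq: "(x::complex^4) = y \<longleftrightarrow> x$1 = y$1 \<and> x$2 = y$2 \<and> x$3 = y$3 \<and> x$4 = y$4"
  by (auto simp: vec_eq_iff forall_4)

lemma axis4: "axis (1::4) (1::complex) $ 1 = 1" "axis (1::4) (1::complex) $ 2 = 0" "axis (1::4) (1::complex) $ 3 = 0" "axis (1::4) (1::complex) $ 4 = 0"
  "axis (2::4) (1::complex) $ 1 = 0" "axis (2::4) (1::complex) $ 2 = 1" "axis (2::4) (1::complex) $ 3 = 0" "axis (2::4) (1::complex) $ 4 = 0"
  "axis (3::4) (1::complex) $ 1 = 0" "axis (3::4) (1::complex) $ 2 = 0" "axis (3::4) (1::complex) $ 3 = 1" "axis (3::4) (1::complex) $ 4 = 0"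
  "axis (4::4) (1::complex) $ 1 = 0" "axis (4::4) (1::complex) $ 2 = 0" "axis (4::4) (1::complex) $ 3 = 0" "axis (4::4) (1::complex) $ 4 = 1"
  by (simp_all add: axis_def)

definition kvec :: "complex^4 \<Rightarrow> complex^4 \<Rightarrow> complex^4 \<Rightarrow> complex^4" where
  "kvec a b c = (\<chi> j. det4 a b c (axis j 1))"

lemma kvec_dot: "tdot (kvec a b c) d = det4 a b c d"
proof -
  have "kvec a b c = (\<chi> j. det4 a b c (axis j 1))" by (simp add: kvec_def)
  then show ?thesis
    by (simp add: tdot_4 det4_expand axis4 algebra_simps)
qed

lemma cen_kvec: "cen C = kvec (C$1) (C$2) (C$3)"
  by (simp add: cen_def kvec_def)

lemma cen_dot: "tdot (cen C) d = det4 (C$1) (C$2) (C$3) d"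
  by (simp add: cen_kvec kvec_dot)

lemma det4_rep: "det4 a b c a = 0" "det4 a b c b = 0" "det4 a b c c = 0" "det4 a b b d = 0"
  "det4 a a c d = 0" "det4 a b a d = 0"
  by (simp add: det4_expand; algebra)+

lemma mv_row: "(C *v x) $ r = tdot (C $ r) x"
  by (simp add: matrix_vector_mult_def tdot_def)

lemma C_cen: "(C::complex^4^3) *v cen C = 0"
proof -
  have "(C *v cen C) $ r = 0" for r
  proof -
    have "(C *v cen C) $ r = tdot (cen C) (C$r)" by (simp add: mv_row tdot_comm)
    also have "\<dots> = det4 (C$1) (C$2) (C$3) (C$r)" by (simp add: cen_dot)
    also have "\<dots> = 0" using exhaust_3[of r] by (auto simp: det4_rep)
    finally show ?thesis .
  qed
  then show ?thesis by (simp add: vec_eq_iff)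
qed

lemma det4_comb1: "det4 (s *s a + t *s b + w *s c) b c d = s * det4 a b c d"
  by (simp add: det4_expand; algebra)
lemma det4_comb2: "det4 a (s *s a + t *s b + w *s c) c d = t * det4 a b c d"
  by (simp add: det4_expand; algebra)
lemma det4_comb3: "det4 a b (s *s a + t *s b + w *s c) d = w * det4 a b c d"
  by (simp add: det4_expand; algebra)
lemma det4_swap23: "det4 X a b R = - det4 X b a R"
  by (simp add: det4_expand; algebra)
lemma det4_bilin_uv: "det4 a (\<alpha> *s u + \<beta> *s v) c (\<alpha>' *s u + \<beta>' *s v) = (\<alpha>*\<beta>' - \<beta>*\<alpha>') * det4 a u c v"
  by (simp add: det4_expand; algebra)
lemma det4_span0: "det4 X (a *s X + b *s Y) (a' *s X + b' *s Y) R = 0"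
  by (simp add: det4_expand; algebra)
lemma det4_scale23: "det4 X (g *s p) (g' *s q) R = g * g' * det4 X p q R"
  by (simp add: det4_expand; algebra)
lemma det4_zero2: "det4 X 0 q R = 0"  "det4 X q 0 R = 0" "det4 0 q r R = 0" "det4 q r 0 R = 0"
  by (simp_all add: det4_expand)

definition mat4 :: "complex^4 \<Rightarrow> complex^4 \<Rightarrow> complex^4 \<Rightarrow> complex^4 \<Rightarrow> complex^4^4" where
  "mat4 a b c d = (\<chi> r::4. if r = 1 then a else if r = 2 then b else if r = 3 then c else d)"

lemma det_mat4: "det (mat4 a b c d) = det4 a b c d"
  by (simp add: mat4_def det4_def)

lemma mat4_mv: "mat4 a b c d *v x = (\<chi> r::4. if r = 1 then tdot a x else if r = 2 then tdot b x else if r = 3 then tdot c x else tdot d x)"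
  by (simp add: vec_eq_iff mv_row mat4_def)

lemma kill4:
  assumes "det4 a b c d \<noteq> 0" "tdot a x = 0" "tdot b x = 0" "tdot c x = 0" "tdot d x = 0"
  shows "x = 0"
proof -
  have "invertible (mat4 a b c d)" using assms(1) by (simp add: invertible_det_nz det_mat4)
  then obtain B where B: "B ** mat4 a b c d = mat 1" unfolding invertible_def by blast
  have "mat4 a b c d *v x = 0" using assms(2-5) by (simp add: mat4_mv vec_eq_iff)
  then have "B *v (mat4 a b c d *v x) = 0" by simp
  then show ?thesis by (simp add: matrix_vector_mul_assoc B)
qed

lemma solve4:
  assumes "det4 a b c d \<noteq> 0"
  shows "\<exists>x. tdot a x = p \<and> tdot b x = q \<and> tdot c x = r \<and> tdot d x = s"
proof -
  have "invertible (mat4 a b c d)" using assms(1) by (simp add: invertible_det_nz det_mat4)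
  then obtain B where B: "mat4 a b c d ** B = mat 1" unfolding invertible_def by blast
  let ?t = "(\<chi> i::4. if i = 1 then p else if i = 2 then q else if i = 3 then r else s)"
  have "mat4 a b c d *v (B *v ?t) = ?t" by (simp add: matrix_vector_mul_assoc B)
  then have "(mat4 a b c d *v (B *v ?t)) $ i = ?t $ i" for i by simp
  from this[of 1] this[of 2] this[of 3] this[of 4] show ?thesis
    by (intro exI[of _ "B *v ?t"]) (simp add: mat4_mv)
qed

lemma core_easy:
  assumes "cols_dependent3 a b c"
  shows "det4 a b c d = 0"
proof -
  obtain s t w where st: "(s, t, w) \<noteq> (0, 0, 0)" "s *s a + t *s b + w *s c = 0"
    using assms unfolding cols_dependent3_def by blast
  have "s * det4 a b c d = 0" using det4_comb1[of s a t b w c d] st(2) by (simp add: det4_zero2)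
  moreover have "t * det4 a b c d = 0" using det4_comb2[of a s t b w c d] st(2) by (simp add: det4_zero2)
  moreover have "w * det4 a b c d = 0" using det4_comb3[of a b s t w c d] st(2) by (simp add: det4_expand)
  ultimately show ?thesis using st(1) by auto
qed

lemma span_ne:
  assumes "finite S" "card S < 4"
  shows "\<exists>d::complex^4. d \<notin> vec.span S"
proof (rule ccontr)
  assume "\<not> ?thesis"
  then have "UNIV \<subseteq> vec.span S" by auto
  then have "vec.dim (UNIV::(complex^4) set) \<le> card S" using vec.dim_le_card assms(1) by blast
  moreover have "vec.dim (UNIV::(complex^4) set) = 4" using vec_dim_card[where 'a=complex and 'n=4] by simp
  ultimately show False using assms(2) by simp
qed

lemma core_hard:
  assumes "\<not> cols_dependent3 a b c"
  shows "\<exists>d. det4 a b c d \<noteq> 0"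
proof -
  have "card {a, b, c} \<le> 3"
    by (auto simp: card_insert_if)
  then have "card {a, b, c} < 4" by simp
  then obtain d where d: "d \<notin> vec.span {a, b, c}" using span_ne[of "{a,b,c}"] by auto
  have "det4 a b c d \<noteq> 0"
  proof
    assume "det4 a b c d = 0"
    then have "\<not> invertible (mat4 a b c d)" by (simp add: invertible_det_nz det_mat4)
    then have "\<not> (\<exists>B. mat4 a b c d ** B = mat 1)" by (simp add: invertible_right_inverse)
    then obtain cc where cc: "(\<Sum>i\<in>UNIV. cc i *s row i (mat4 a b c d)) = 0" "\<exists>i. cc i \<noteq> 0"
      unfolding matrix_right_invertible_independent_rows by blast
    have rows: "row 1 (mat4 a b c d) = a" "row 2 (mat4 a b c d) = b" "row 3 (mat4 a b c d) = c"
      "row 4 (mat4 a b c d) = d"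
      by (simp_all add: row_def mat4_def)
    have eq: "cc 1 *s a + cc 2 *s b + cc 3 *s c + cc 4 *s d = 0"
      using cc(1) by (simp add: sum_4 rows)
    show False
    proof (cases "cc 4 = 0")
      case True
      obtain i where i: "cc i \<noteq> 0" using cc(2) by blast
      then have "(cc 1, cc 2, cc 3) \<noteq> (0, 0, 0)" using True exhaust_4[of i] by auto
      moreover have "cc 1 *s a + cc 2 *s b + cc 3 *s c = 0" using eq True by simp
      ultimately show False using assms unfolding cols_dependent3_def by blast
    next
      case False
      have "d = (- 1 / cc 4) *s (cc 1 *s a + cc 2 *s b + cc 3 *s c)"
      proof -
        have "- (cc 1 *s a + cc 2 *s b + cc 3 *s c) = cc 4 *s d"
          by (metis eq neg_eq_iff_add_eq_0)
        then have "cc 4 *s d = - (cc 1 *s a + cc 2 *s b + cc 3 *s c)" by simp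
        then have "(1 / cc 4) *s (cc 4 *s d) = (1 / cc 4) *s (- (cc 1 *s a + cc 2 *s b + cc 3 *s c))" by simp
        then show ?thesis using False by (simp add: vector_smult_assoc)
      qed
      moreover have "(- 1 / cc 4) *s (cc 1 *s a + cc 2 *s b + cc 3 *s c) \<in> vec.span {a, b, c}"
        by (intro vec.span_scale vec.span_add) (auto intro: vec.span_base)
      ultimately show False using d by simp
    qed
  qed
  then show ?thesis by blast
qed




lemma polyfun_cmult: "p \<in> polyfun V \<Longrightarrow> (\<lambda>z. c * p z) \<in> polyfun V"
proof -
  assume "p \<in> polyfun V"
  then have "(\<lambda>z. (\<lambda>_. c) z * p z) \<in> polyfun V" by (intro polyfun.mult polyfun.const)
  then show ?thesis by simp
qed

lemma polyfun_diff: "p \<in> polyfun V \<Longrightarrow> q \<in> polyfun V \<Longrightarrow> (\<lambda>z. p z - q z) \<in> polyfun V"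
proof -
  assume "p \<in> polyfun V" "q \<in> polyfun V"
  then have "(\<lambda>z. p z + (- 1) * q z) \<in> polyfun V"
    by (intro polyfun.add polyfun_cmult)
  then show ?thesis by simp
qed

lemma polyfun_sum: "finite S \<Longrightarrow> (\<And>s. s \<in> S \<Longrightarrow> f s \<in> polyfun V) \<Longrightarrow> (\<lambda>z. \<Sum>s\<in>S. f s z) \<in> polyfun V"
proof (induction S rule: finite_induct)
  case empty
  then show ?case using polyfun.const[of 0] by simp
next
  case (insert x F)
  then have "(\<lambda>z. f x z + (\<Sum>s\<in>F. f s z)) \<in> polyfun V" by (intro polyfun.add) auto
  then show ?case using insert by simp
qed

lemma polyfun_prod: "finite S \<Longrightarrow> (\<And>s. s \<in> S \<Longrightarrow> f s \<in> polyfun V) \<Longrightarrow> (\<lambda>z. \<Prod>s\<in>S. f s z) \<in> polyfun V"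
proof (induction S rule: finite_induct)
  case empty
  then show ?case using polyfun.const[of 1] by simp
next
  case (insert x F)
  then have "(\<lambda>z. f x z * (\<Prod>s\<in>F. f s z)) \<in> polyfun V" by (intro polyfun.mult) auto
  then show ?case using insert by simp
qed

lemma polyfun_tdot:
  assumes "\<And>k. (\<lambda>z. a z $ k) \<in> polyfun V" "\<And>k. (\<lambda>z. b z $ k) \<in> polyfun V"
  shows "(\<lambda>z. tdot (a z) (b z)) \<in> polyfun V"
  unfolding tdot_def by (intro polyfun_sum polyfun.mult assms) auto

lemma polyfun_mv:
  assumes "\<And>k. (\<lambda>z. a z $ k) \<in> polyfun V" "\<And>r c. (\<lambda>z. M z $ r $ c) \<in> polyfun V"
  shows "(\<lambda>z. (M z *v a z) $ r) \<in> polyfun V"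
  unfolding matrix_vector_mult_def by (simp only: vec_lambda_beta) (intro polyfun_sum polyfun.mult assms; simp)

lemma polyfun_constv: "(\<lambda>z. (w::complex^'n) $ k) \<in> polyfun V"
  by (rule polyfun.const)
lemma polyfun_constm: "(\<lambda>z. (w::complex^'n^'m) $ r $ k) \<in> polyfun V"
  by (rule polyfun.const)

lemma polyfun_det4:
  assumes "\<And>k. (\<lambda>z. a z $ k) \<in> polyfun V" "\<And>k. (\<lambda>z. b z $ k) \<in> polyfun V"
    "\<And>k. (\<lambda>z. c z $ k) \<in> polyfun V" "\<And>k. (\<lambda>z. d z $ k) \<in> polyfun V"
  shows "(\<lambda>z. det4 (a z) (b z) (c z) (d z)) \<in> polyfun V"
  unfolding det4_expand by (intro polyfun.add polyfun_diff polyfun.mult assms)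

lemma polyfun_tendsto:
  assumes "p \<in> polyfun V" "\<And>f. f \<in> V \<Longrightarrow> ((\<lambda>t. f (g t)) \<longlongrightarrow> f x) F"
  shows "((\<lambda>t. p (g t)) \<longlongrightarrow> p x) F"
  using assms(1)
proof (induction rule: polyfun.induct)
  case (const c) then show ?case by simp
next
  case (var f) then show ?case using assms(2) by simp
next
  case (add p q) then show ?case by (intro tendsto_add)
next
  case (mult p q) then show ?case by (intro tendsto_mult)
qed

lemma polyfun_line:
  assumes "p \<in> polyfun V" "\<And>f. f \<in> V \<Longrightarrow> \<exists>\<alpha> \<beta>. \<forall>t. f (g t) = \<alpha> + \<beta> * t"
  shows "\<exists>P. \<forall>t. p (g t) = poly P t"
  using assms(1)
proof (induction rule: polyfun.induct)
  case (const c) then show ?case by (intro exI[of _ "[:c:]"]) simp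
next
  case (var f)
  then obtain \<alpha> \<beta> where "\<forall>t. f (g t) = \<alpha> + \<beta> * t" using assms(2) by blast
  then show ?case by (intro exI[of _ "[:\<alpha>, \<beta>:]"]) (simp add: algebra_simps)
next
  case (add p q)
  then obtain P Q where "\<forall>t. p (g t) = poly P t" "\<forall>t. q (g t) = poly Q t" by blast
  then show ?case by (intro exI[of _ "P + Q"]) simp
next
  case (mult p q)
  then obtain P Q where "\<forall>t. p (g t) = poly P t" "\<forall>t. q (g t) = poly Q t" by blast
  then show ?case by (intro exI[of _ "P * Q"]) simp
qed

definition lin_coords :: "('a \<Rightarrow> complex) set \<Rightarrow> bool" where
  "lin_coords V \<longleftrightarrow> (\<forall>a b. \<exists>g. g 0 = a \<and> g 1 = b \<and> (\<forall>f\<in>V. \<exists>\<alpha> \<beta>. \<forall>t. f (g t) = \<alpha> + \<beta> * t))"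

lemma two_nonzero:
  assumes "lin_coords V" "p \<in> polyfun V" "q \<in> polyfun V" "p a \<noteq> 0" "q b \<noteq> 0"
  shows "\<exists>z. p z * q z \<noteq> 0"
proof -
  obtain g where g: "g 0 = a" "g 1 = b" "\<And>f. f \<in> V \<Longrightarrow> \<exists>\<alpha> \<beta>. \<forall>t. f (g t) = \<alpha> + \<beta> * t"
    using assms(1) unfolding lin_coords_def by blast
  obtain P where P: "\<forall>t. p (g t) = poly P t" using polyfun_line[of p V g] assms(2) g(3) by blast
  obtain Q where Q: "\<forall>t. q (g t) = poly Q t" using polyfun_line[of q V g] assms(3) g(3) by blast
  have "P \<noteq> 0" using P assms(4) g(1) by (metis poly_0)
  moreover have "Q \<noteq> 0" using Q assms(5) g(2) by (metis poly_0)
  ultimately have "P * Q \<noteq> 0" by simp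
  then obtain t where "poly (P * Q) t \<noteq> 0" using poly_all_0_iff_0 by blast
  then show ?thesis using P Q by (intro exI[of _ "g t"]) simp
qed

lemma prod_nonzero:
  assumes "lin_coords V" "finite I" "\<And>i. i \<in> I \<Longrightarrow> f i \<in> polyfun V" "\<And>i. i \<in> I \<Longrightarrow> \<exists>z. f i z \<noteq> 0"
  shows "\<exists>z. (\<Prod>i\<in>I. f i z) \<noteq> 0"
  using assms(2-4)
proof (induction I rule: finite_induct)
  case empty then show ?case by simp
next
  case (insert x F)
  then obtain z1 where z1: "(\<Prod>i\<in>F. f i z1) \<noteq> 0" by blast
  obtain z2 where z2: "f x z2 \<noteq> 0" using insert by blast
  have "(\<lambda>z. \<Prod>i\<in>F. f i z) \<in> polyfun V" using insert by (intro polyfun_prod) auto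
  then obtain z where "f x z * (\<Prod>i\<in>F. f i z) \<noteq> 0"
    using two_nonzero[OF assms(1), of "f x" "\<lambda>z. \<Prod>i\<in>F. f i z" z2 z1] insert z1 z2 by auto
  then show ?case using insert by (intro exI[of _ z]) simp
qed

lemma lin_coords_cam: "lin_coords (cam_coords m)"
  unfolding lin_coords_def
proof (intro allI)
  fix a b :: "nat \<Rightarrow> complex^4^3"
  let ?g = "\<lambda>t::complex. (\<lambda>i. \<chi> r c. a i $ r $ c + t * (b i $ r $ c - a i $ r $ c))"
  have "?g 0 = a" "?g 1 = b" by (auto simp: vec_eq_iff)
  moreover have "\<forall>f\<in>cam_coords m. \<exists>\<alpha> \<beta>. \<forall>t. f (?g t) = \<alpha> + \<beta> * t"
  proof
    fix f assume "f \<in> cam_coords m"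
    then obtain i r c where f: "f = (\<lambda>C. C i $ r $ c)" unfolding cam_coords_def by blast
    show "\<exists>\<alpha> \<beta>. \<forall>t. f (?g t) = \<alpha> + \<beta> * t"
      by (rule exI[of _ "a i $ r $ c"], rule exI[of _ "b i $ r $ c - a i $ r $ c"]) (simp add: f mult.commute)
  qed
  ultimately show "\<exists>g. g 0 = a \<and> g 1 = b \<and> (\<forall>f\<in>cam_coords m. \<exists>\<alpha> \<beta>. \<forall>t. f (g t) = \<alpha> + \<beta> * t)"
    by (intro exI[of _ ?g]) simp
qed

lemma img_var: "i < m \<Longrightarrow> (\<lambda>x. x i $ r) \<in> polyfun (img_coords m)"
  by (rule polyfun.var) (auto simp: img_coords_def)

lemma cam_var: "i < m \<Longrightarrow> (\<lambda>C. C i $ r $ c) \<in> polyfun (cam_coords m)"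
  by (rule polyfun.var) (auto simp: cam_coords_def)

lemma cen_poly: "i < m \<Longrightarrow> (\<lambda>C. cen (C i) $ k) \<in> polyfun (cam_coords m)"
  unfolding cen_def by (simp only: vec_lambda_beta) (intro polyfun_det4 cam_var polyfun_constv)

lemma camv_poly: "i < m \<Longrightarrow> (\<lambda>C. (C i *v w) $ k) \<in> polyfun (cam_coords m)"
  by (intro polyfun_mv polyfun_constv cam_var)




lemma tdot_axis: "tdot (axis k 1) q = q $ k" "tdot q (axis k 1) = q $ k"
proof -
  have "\<And>j. (axis k 1 $ j) * q$j = (if j = k then q$k else 0)" "\<And>j. q$j * (axis k 1 $ j) = (if j = k then q$k else 0)"
    by (simp_all add: axis_def)
  then show "tdot (axis k 1) q = q $ k" "tdot q (axis k 1) = q $ k"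
    by (simp_all add: tdot_def)
qed

lemma mv_scale: "(C::complex^'n^'m) *v (s *s a) = s *s (C *v a)"
  unfolding vec_eq_iff matrix_vector_mult_def by (auto simp: sum_distrib_left mult.left_commute intro!: sum.cong)
lemma mv_lin: "(C::complex^'n^'m) *v (s *s a + t *s b) = s *s (C *v a) + t *s (C *v b)"
  by (simp add: matrix_vector_right_distrib mv_scale)
lemma mv_add: "(C::complex^'n^'m) *v (a + t *s b) = C *v a + t *s (C *v b)"
  by (simp add: matrix_vector_right_distrib mv_scale)

lemma li2_nz: "lin_indep2 u v \<Longrightarrow> u \<noteq> 0 \<and> v \<noteq> 0"
proof -
  assume l: "lin_indep2 u v"
  have "u \<noteq> 0"
  proof
    assume "u = 0" then have "(1::complex) *s u + 0 *s v = 0" by simp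
    then have "(1::complex) = 0" using l unfolding lin_indep2_def by blast
    then show False by simp
  qed
  moreover have "v \<noteq> 0"
  proof
    assume "v = 0" then have "(0::complex) *s u + 1 *s v = 0" by simp
    then have "(1::complex) = 0" using l unfolding lin_indep2_def by blast
    then show False by simp
  qed
  ultimately show ?thesis by blast
qed

lemma li2_intro: "X \<noteq> 0 \<Longrightarrow> Y \<noteq> 0 \<Longrightarrow> (\<And>a. Y \<noteq> a *s X) \<Longrightarrow> lin_indep2 X Y"
  unfolding lin_indep2_def
proof (intro allI impI)
  fix a b assume X: "X \<noteq> 0" and Y: "Y \<noteq> 0" and n: "\<And>a. Y \<noteq> a *s X" and e: "a *s X + b *s Y = 0"
  show "a = 0 \<and> b = 0"
  proof (cases "b = 0")
    case True then show ?thesis using e X by (simp add: vector_mul_eq_0)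
  next
    case False
    then have "Y = (- a / b) *s X"
    proof -
      have "b *s Y = - (a *s X)" using e by (metis neg_eq_iff_add_eq_0)
      then have "(1/b) *s (b *s Y) = (1/b) *s (- (a *s X))" by simp
      then show ?thesis using False by (simp add: vector_smult_assoc)
    qed
    then show ?thesis using n by blast
  qed
qed

lemma minor_exists: "lin_indep2 u v \<Longrightarrow> \<exists>a b. u$a * v$b - u$b * v$a \<noteq> 0"
proof (rule ccontr)
  assume li: "lin_indep2 u v" and n: "\<not> (\<exists>a b. u$a * v$b - u$b * v$a \<noteq> 0)"
  obtain a where a: "u $ a \<noteq> 0" using li2_nz[OF li] by (auto simp: vec_eq_iff)
  have eqs: "u$a * v$b - u$b * v$a = 0" for b using n by blast
  have "(v$a) *s u + (- (u$a)) *s v = 0"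
  proof (rule iffD2[OF vec_eq_iff], rule allI)
    fix b
    have "v$a * u$b + - u$a * v$b = - (u$a * v$b - u$b * v$a)" by (simp add: algebra_simps)
    then show "((v$a) *s u + (- (u$a)) *s v) $ b = 0 $ b" using eqs[of b] by simp
  qed
  then have "v$a = 0 \<and> - (u$a) = 0" using li unfolding lin_indep2_def by blast
  then show False using a by simp
qed

lemma cross_dep0: "s *s p + t *s q = 0 \<Longrightarrow> (s, t) \<noteq> (0, 0) \<Longrightarrow> cross3c p q = 0"
proof -
  assume e: "s *s p + t *s q = 0" and nz: "(s, t) \<noteq> (0, 0)"
  have "s *s cross3c p q = 0"
    using arg_cong[OF e, of "\<lambda>x. cross3c x q"] by (simp add: cross_lin1 cross_same)
  moreover have "t *s cross3c p q = 0"
    using arg_cong[OF e, of "\<lambda>x. cross3c p x"] by (simp add: cross_lin2 cross_same)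
  ultimately show ?thesis using nz by (auto simp: vector_mul_eq_0)
qed

lemma camline_li: "cam_line C a b \<noteq> 0 \<Longrightarrow> lin_indep2 a b"
  unfolding lin_indep2_def cam_line_def
proof (intro allI impI, rule ccontr)
  fix s t assume c: "cross3c (C *v a) (C *v b) \<noteq> 0" and e: "s *s a + t *s b = 0" and n: "\<not> (s = 0 \<and> t = 0)"
  have "s *s (C *v a) + t *s (C *v b) = 0" using arg_cong[OF e, of "\<lambda>x. C *v x"] by (simp add: mv_lin)
  then show False using cross_dep0 c n by blast
qed

lemma cross_zero_dep: "cross3c p q = 0 \<Longrightarrow> \<exists>s t. (s, t) \<noteq> (0, 0) \<and> s *s p + t *s q = 0"
proof (cases "p = 0")
  case True then show ?thesis by (intro exI[of _ 1] exI[of _ 0]) simp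
next
  case False
  assume c: "cross3c p q = 0"
  obtain k where k: "p $ k \<noteq> 0" using False by (auto simp: vec_eq_iff)
  have "cross3c (axis k 1) (cross3c p q) = 0" using c by simp
  then have "q$k *s p - p$k *s q = 0" by (simp add: bac_cab tdot_axis)
  then have "q$k *s p + (- p$k) *s q = 0" by (simp add: algebra_simps)
  then show ?thesis using k by (intro exI[of _ "q$k"] exI[of _ "- p$k"]) simp
qed

lemma in_plane: "cross3c p q \<noteq> 0 \<Longrightarrow> tdot x (cross3c p q) = 0 \<Longrightarrow> \<exists>a b. x = a *s p + b *s q"
proof -
  assume n: "cross3c p q \<noteq> 0" and o: "tdot x (cross3c p q) = 0"
  obtain k where k: "cross3c p q $ k \<noteq> 0" using n by (auto simp: vec_eq_iff)
  have "tdot (cross3c p q) (axis k 1) *s x = tdot (cross3c x q) (axis k 1) *s p + tdot (cross3c p x) (axis k 1) *s q + tdot (cross3c p q) x *s axis k 1"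
    by (rule cramer3)
  then have "cross3c p q $ k *s x = cross3c x q $ k *s p + cross3c p x $ k *s q"
    using o by (simp add: tdot_axis tdot_comm)
  then have "(1 / cross3c p q $ k) *s (cross3c p q $ k *s x) = (1 / cross3c p q $ k) *s (cross3c x q $ k *s p + cross3c p x $ k *s q)"
    by simp
  then have "x = (cross3c x q $ k / cross3c p q $ k) *s p + (cross3c p x $ k / cross3c p q $ k) *s q"
    using k by (simp add: vector_smult_assoc vector_add_ldistrib)
  then show ?thesis by blast
qed

lemma line_par: "cross3c p q \<noteq> 0 \<Longrightarrow> tdot l p = 0 \<Longrightarrow> tdot l q = 0 \<Longrightarrow> \<exists>c. l = c *s cross3c p q"
proof -
  assume n: "cross3c p q \<noteq> 0" and o: "tdot l p = 0" "tdot l q = 0"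
  obtain k where k: "cross3c p q $ k \<noteq> 0" using n by (auto simp: vec_eq_iff)
  have "tdot (cross3c p q) (axis k 1) *s l = tdot l p *s cross3c q (axis k 1) + tdot l q *s cross3c (axis k 1) p + tdot l (axis k 1) *s cross3c p q"
    by (rule dual3)
  then have "cross3c p q $ k *s l = l $ k *s cross3c p q" using o by (simp add: tdot_axis)
  then have "(1 / cross3c p q $ k) *s (cross3c p q $ k *s l) = (1 / cross3c p q $ k) *s (l $ k *s cross3c p q)"
    by simp
  then have "l = (l $ k / cross3c p q $ k) *s cross3c p q" using k by (simp add: vector_smult_assoc)
  then show ?thesis by blast
qed

lemma transpose_mv3: "transpose (C::complex^4^3) *v l = l$1 *s C$1 + l$2 *s C$2 + l$3 *s C$3"
  by (simp add: vec_eq_iff matrix_vector_mult_def transpose_def sum_3 mult.commute)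

lemma cen_zero_if: "(\<And>d. det4 (C$1) (C$2) (C$3) d = 0) \<Longrightarrow> cen C = 0"
  by (simp add: cen_def vec_eq_iff)

lemma cen_nz_inj: "cen C \<noteq> 0 \<Longrightarrow> transpose C *v l = 0 \<Longrightarrow> l = 0"
proof (rule ccontr)
  assume c: "cen C \<noteq> 0" and t: "transpose C *v l = 0" and l: "l \<noteq> 0"
  have "(l$1, l$2, l$3) \<noteq> (0, 0, 0)" using l by (auto simp: vec_eq_iff forall_3)
  then have "cols_dependent3 (C$1) (C$2) (C$3)" using t unfolding cols_dependent3_def transpose_mv3 by blast
  then have "cen C = 0" using core_easy cen_zero_if by blast
  then show False using c by simp
qed

lemma cen_kernel:
  assumes c: "cen C \<noteq> 0" and W: "C *v W = 0"
  shows "\<exists>g. W = g *s cen C"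
proof -
  obtain j where j: "cen C $ j \<noteq> 0" using c by (auto simp: vec_eq_iff)
  have d: "det4 (C$1) (C$2) (C$3) (axis j 1) \<noteq> 0" using j by (simp add: cen_dot[symmetric] tdot_axis)
  let ?W = "W - (W$j / cen C $ j) *s cen C"
  have CW: "C *v ?W = 0"
    using W C_cen[of C] by (simp add: matrix_vector_mult_diff_distrib mv_scale)
  have "?W = 0"
  proof (rule kill4[OF d])
    show "tdot (C$1) ?W = 0" "tdot (C$2) ?W = 0" "tdot (C$3) ?W = 0"
      using CW by (simp_all add: mv_row[symmetric])
    show "tdot (axis j 1) ?W = 0" using j by (simp add: tdot_axis)
  qed
  then show ?thesis by (intro exI[of _ "W$j / cen C $ j"]) simp
qed

lemma cen_surj:
  assumes c: "cen C \<noteq> 0"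
  shows "\<exists>Z. C *v Z = z"
proof -
  obtain j where j: "cen C $ j \<noteq> 0" using c by (auto simp: vec_eq_iff)
  have d: "det4 (C$1) (C$2) (C$3) (axis j 1) \<noteq> 0" using j by (simp add: cen_dot[symmetric] tdot_axis)
  obtain Z where Z: "tdot (C$1) Z = z$1" "tdot (C$2) Z = z$2" "tdot (C$3) Z = z$3"
    using solve4[OF d, of "z$1" "z$2" "z$3" 0] by blast
  have "C *v Z = z" using Z by (simp add: vec_eq_iff forall_3 mv_row)
  then show ?thesis by blast
qed




lemma cam_axis: "\<exists>K::complex^4^3. cen K = axis c 1"
proof -
  define K1 :: "complex^4^3" where "K1 = (\<chi> r. if r = 1 then - axis 2 1 else if r = 2 then axis 3 1 else axis 4 1)"
  define K2 :: "complex^4^3" where "K2 = (\<chi> r. if r = 1 then axis 1 1 else if r = 2 then axis 3 1 else axis 4 1)"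
  define K3 :: "complex^4^3" where "K3 = (\<chi> r. if r = 1 then - axis 1 1 else if r = 2 then axis 2 1 else axis 4 1)"
  define K4 :: "complex^4^3" where "K4 = (\<chi> r. if r = 1 then axis 1 1 else if r = 2 then axis 2 1 else axis 3 1)"
  have "cen K1 = axis 1 1" by (simp add: cen_def vec4_eq det4_expand K1_def axis4)
  moreover have "cen K2 = axis 2 1" by (simp add: cen_def vec4_eq det4_expand K2_def axis4)
  moreover have "cen K3 = axis 3 1" by (simp add: cen_def vec4_eq det4_expand K3_def axis4)
  moreover have "cen K4 = axis 4 1" by (simp add: cen_def vec4_eq det4_expand K4_def axis4)
  ultimately show ?thesis using exhaust_4[of c] by blast
qed

lemma minors_det_uv:
  assumes li: "lin_indep2 u v"
  shows "\<exists>c d. det4 (axis c 1) u (axis d 1) v \<noteq> 0"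
proof (rule ccontr)
  assume "\<not> ?thesis"
  then have H: "\<And>c d. det4 (axis c 1) u (axis d 1) v = 0" by blast
  have e12: "u$3 * v$4 = u$4 * v$3" using H[of 1 2] by (simp add: det4_expand axis4; algebra)
  have e13: "u$2 * v$4 = u$4 * v$2" using H[of 1 3] by (simp add: det4_expand axis4; algebra)
  have e14: "u$2 * v$3 = u$3 * v$2" using H[of 1 4] by (simp add: det4_expand axis4; algebra)
  have e23: "u$1 * v$4 = u$4 * v$1" using H[of 2 3] by (simp add: det4_expand axis4; algebra)
  have e24: "u$1 * v$3 = u$3 * v$1" using H[of 2 4] by (simp add: det4_expand axis4; algebra)
  have e34: "u$1 * v$2 = u$2 * v$1" using H[of 3 4] by (simp add: det4_expand axis4; algebra)
  have "u$a * v$b - u$b * v$a = 0" for a b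
    using exhaust_4[of a] exhaust_4[of b] e12 e13 e14 e23 e24 e34 by (elim disjE) simp_all
  then show False using minor_exists[OF li] by blast
qed

lemma X_det3:
  assumes "X \<noteq> 0" shows "\<exists>c d r. det4 X (axis c 1) (axis d 1) (axis r 1) \<noteq> 0"
proof (rule ccontr)
  assume "\<not> ?thesis"
  then have H: "\<And>c d r. det4 X (axis c 1) (axis d 1) (axis r 1) = 0" by blast
  have "X$1 = 0" using H[of 2 3 4] by (simp add: det4_expand axis4)
  moreover have "X$2 = 0" using H[of 1 3 4] by (simp add: det4_expand axis4)
  moreover have "X$3 = 0" using H[of 1 2 4] by (simp add: det4_expand axis4)
  moreover have "X$4 = 0" using H[of 1 2 3] by (simp add: det4_expand axis4)
  ultimately show False using assms by (simp add: vec4_eq)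
qed

lemma X_det2:
  assumes "X \<noteq> 0" shows "\<exists>c d e. det4 (axis c 1) (axis d 1) (axis e 1) X \<noteq> 0"
proof (rule ccontr)
  assume "\<not> ?thesis"
  then have H: "\<And>c d r. det4 (axis c 1) (axis d 1) (axis r 1) X = 0" by blast
  have "X$1 = 0" using H[of 2 3 4] by (simp add: det4_expand axis4)
  moreover have "X$2 = 0" using H[of 1 3 4] by (simp add: det4_expand axis4)
  moreover have "X$3 = 0" using H[of 1 2 4] by (simp add: det4_expand axis4)
  moreover have "X$4 = 0" using H[of 1 2 3] by (simp add: det4_expand axis4)
  ultimately show False using assms by (simp add: vec4_eq)
qed

lemma g1_wit:
  assumes "lin_indep2 u v" shows "\<exists>K::complex^4^3. cam_line K u v $ 1 \<noteq> 0"
proof -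
  obtain a b where ab: "u$a * v$b - u$b * v$a \<noteq> 0" using minor_exists[OF assms] by blast
  define K :: "complex^4^3" where "K = (\<chi> r. if r = 2 then axis a 1 else if r = 3 then axis b 1 else 0)"
  have "K$2 = axis a 1" "K$3 = axis b 1" by (simp_all add: K_def)
  then have "cam_line K u v $ 1 = u$a * v$b - u$b * v$a"
    by (simp add: cam_line_def cross_comp mv_row tdot_axis)
  then have "cam_line K u v $ 1 \<noteq> 0" using ab by simp
  then show ?thesis by blast
qed




definition good :: "nat \<Rightarrow> complex^4 \<Rightarrow> complex^4 \<Rightarrow> complex^4 \<Rightarrow> complex^4 \<Rightarrow> (nat \<Rightarrow> complex^4^3) \<Rightarrow> bool" where
  "good m X u v R C \<longleftrightarrow> (\<forall>i<m. cam_line (C i) u v $ 1 \<noteq> 0) \<and>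
     (\<forall>j. 1 \<le> j \<and> j < m \<longrightarrow> det4 (cen (C 0)) u (cen (C j)) v \<noteq> 0) \<and>
     (\<forall>i j. i < j \<and> j < m \<longrightarrow> det4 X (cen (C i)) (cen (C j)) R \<noteq> 0) \<and>
     (3 \<le> m \<longrightarrow> det4 (cen (C 0)) (cen (C 1)) (cen (C 2)) X \<noteq> 0)"

lemma two_nonzero_cam:
  assumes "p \<in> polyfun (cam_coords m)" "q \<in> polyfun (cam_coords m)" "\<exists>a. p a \<noteq> 0" "\<exists>b. q b \<noteq> 0"
  shows "\<exists>z. p z * q z \<noteq> 0"
  using assms two_nonzero[OF lin_coords_cam, of p m q] by blast

lemma generic_good:
  assumes m2: "m \<ge> 2" and X0: "X \<noteq> 0" and li: "lin_indep2 u v"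
  shows "\<exists>R Z. zariski_closed (cam_coords m) Z \<and> Z \<noteq> UNIV \<and> (\<forall>C. C \<notin> Z \<longrightarrow> good m X u v R C)"
proof -
  obtain c0 d0 r0 where H3: "det4 X (axis c0 1) (axis d0 1) (axis r0 1) \<noteq> 0" using X_det3[OF X0] by blast
  define R where "R = (axis r0 1 :: complex^4)"
  define f1 where "f1 = (\<lambda>i C. cam_line ((C::nat \<Rightarrow> complex^4^3) i) u v $ 1)"
  define f2 where "f2 = (\<lambda>j C. det4 (cen ((C::nat \<Rightarrow> complex^4^3) 0)) u (cen (C j)) v)"
  define f3 where "f3 = (\<lambda>p C. det4 X (cen ((C::nat \<Rightarrow> complex^4^3) (fst p))) (cen (C (snd p))) R)"
  define f4 where "f4 = (\<lambda>C. if 3 \<le> m then det4 (cen ((C::nat \<Rightarrow> complex^4^3) 0)) (cen (C 1)) (cen (C 2)) X else 1)"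
  define I3 where "I3 = {p::nat\<times>nat. fst p < snd p \<and> snd p < m}"
  have fI3: "finite I3"
  proof -
    have "I3 \<subseteq> {..<m} \<times> {..<m}" unfolding I3_def by auto
    then show ?thesis by (rule finite_subset) simp
  qed
  define q1 where "q1 = (\<lambda>C. \<Prod>i\<in>{..<m}. f1 i C)"
  define q2 where "q2 = (\<lambda>C. \<Prod>j\<in>{1..<m}. f2 j C)"
  define q3 where "q3 = (\<lambda>C. \<Prod>p\<in>I3. f3 p C)"
  have pf1: "f1 i \<in> polyfun (cam_coords m)" if "i < m" for i
  proof -
    have "f1 i = (\<lambda>C. (C i *v u)$2 * (C i *v v)$3 - (C i *v u)$3 * (C i *v v)$2)"
      by (simp add: f1_def cam_line_def cross_comp)
    also have "\<dots> \<in> polyfun (cam_coords m)"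
      using that by (intro polyfun_diff polyfun.mult camv_poly)
    finally show ?thesis .
  qed
  have pf2: "f2 j \<in> polyfun (cam_coords m)" if "j < m" for j
    unfolding f2_def using that m2 by (intro polyfun_det4 cen_poly polyfun_constv) auto
  have pf3: "f3 p \<in> polyfun (cam_coords m)" if "p \<in> I3" for p
    unfolding f3_def using that by (intro polyfun_det4 cen_poly polyfun_constv) (auto simp: I3_def)
  have pf4: "f4 \<in> polyfun (cam_coords m)"
  proof (cases "3 \<le> m")
    case True
    then have "f4 = (\<lambda>C. det4 (cen (C 0)) (cen (C 1)) (cen (C 2)) X)" by (simp add: f4_def)
    also have "\<dots> \<in> polyfun (cam_coords m)" using True by (intro polyfun_det4 cen_poly polyfun_constv) auto
    finally show ?thesis .
  next
    case False
    then have "f4 = (\<lambda>C. 1)" by (simp add: f4_def)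
    then show ?thesis using polyfun.const[of 1] by simp
  qed
  have pq1: "q1 \<in> polyfun (cam_coords m)" unfolding q1_def by (intro polyfun_prod pf1) auto
  have pq2: "q2 \<in> polyfun (cam_coords m)" unfolding q2_def by (intro polyfun_prod pf2) auto
  have pq3: "q3 \<in> polyfun (cam_coords m)" unfolding q3_def by (intro polyfun_prod pf3 fI3) auto
  have w1: "\<exists>C. f1 i C \<noteq> 0" for i
  proof -
    obtain K where "cam_line K u v $ 1 \<noteq> 0" using g1_wit[OF li] by blast
    then show ?thesis by (intro exI[of _ "\<lambda>_. K"]) (simp add: f1_def)
  qed
  have w2: "\<exists>C. f2 j C \<noteq> 0" if "1 \<le> j" for j
  proof -
    obtain c d where cd: "det4 (axis c 1) u (axis d 1) v \<noteq> 0" using minors_det_uv[OF li] by blast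
    obtain Kc Kd where K: "cen Kc = axis c 1" "cen Kd = axis d 1" using cam_axis by metis
    show ?thesis using that cd K
      by (intro exI[of _ "\<lambda>k. if k = 0 then Kc else Kd"]) (simp add: f2_def)
  qed
  have w3: "\<exists>C. f3 p C \<noteq> 0" if "p \<in> I3" for p
  proof -
    obtain Kc Kd where K: "cen Kc = axis c0 1" "cen Kd = axis d0 1" using cam_axis by metis
    have "fst p \<noteq> snd p" using that by (auto simp: I3_def)
    then show ?thesis using H3 K
      by (intro exI[of _ "\<lambda>k. if k = fst p then Kc else Kd"]) (simp add: f3_def R_def)
  qed
  have w4: "\<exists>C. f4 C \<noteq> 0"
  proof (cases "3 \<le> m")
    case True
    obtain c d e where cde: "det4 (axis c 1) (axis d 1) (axis e 1) X \<noteq> 0" using X_det2[OF X0] by blast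
    obtain Kc Kd Ke where K: "cen Kc = axis c 1" "cen Kd = axis d 1" "cen Ke = axis e 1" using cam_axis by metis
    show ?thesis using True cde K
      by (intro exI[of _ "\<lambda>k. if k = 0 then Kc else if k = 1 then Kd else Ke"]) (simp add: f4_def)
  next
    case False then show ?thesis by (simp add: f4_def)
  qed
  have n1: "\<exists>C. q1 C \<noteq> 0" unfolding q1_def
    by (rule prod_nonzero[OF lin_coords_cam]) (auto intro: pf1 w1)
  have n2: "\<exists>C. q2 C \<noteq> 0" unfolding q2_def
    by (rule prod_nonzero[OF lin_coords_cam]) (auto intro: pf2 w2)
  have n3: "\<exists>C. q3 C \<noteq> 0" unfolding q3_def
    by (rule prod_nonzero[OF lin_coords_cam]) (auto intro: pf3 w3 fI3)
  have p12: "(\<lambda>C. q1 C * q2 C) \<in> polyfun (cam_coords m)" by (intro polyfun.mult pq1 pq2)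
  have p123: "(\<lambda>C. q1 C * q2 C * q3 C) \<in> polyfun (cam_coords m)" by (intro polyfun.mult pq1 pq2 pq3)
  have n12: "\<exists>C. q1 C * q2 C \<noteq> 0" using two_nonzero_cam[OF pq1 pq2 n1 n2] .
  have n123: "\<exists>C. q1 C * q2 C * q3 C \<noteq> 0" using two_nonzero_cam[OF p12 pq3 n12 n3] .
  define q where "q = (\<lambda>C. q1 C * q2 C * q3 C * f4 C)"
  have pq: "q \<in> polyfun (cam_coords m)" unfolding q_def by (intro polyfun.mult pq1 pq2 pq3 pf4)
  have nq: "\<exists>C. q C \<noteq> 0" unfolding q_def using two_nonzero_cam[OF p123 pf4 n123 w4] .
  define Z where "Z = {C. q C = 0}"
  have "zariski_closed (cam_coords m) Z"
    unfolding zariski_closed_def Z_def using pq by (intro exI[of _ "{q}"]) auto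
  moreover have "Z \<noteq> UNIV" using nq unfolding Z_def by auto
  moreover have "good m X u v R C" if "C \<notin> Z" for C
  proof -
    have q0: "q C \<noteq> 0" using that by (simp add: Z_def)
    then have a1: "q1 C \<noteq> 0" and a2: "q2 C \<noteq> 0" and a3: "q3 C \<noteq> 0" and a4: "f4 C \<noteq> 0"
      by (auto simp: q_def)
    have "\<forall>i<m. f1 i C \<noteq> 0" using a1 by (auto simp: q1_def)
    moreover have "\<forall>j. 1 \<le> j \<and> j < m \<longrightarrow> f2 j C \<noteq> 0" using a2 by (auto simp: q2_def)
    moreover have "\<forall>p\<in>I3. f3 p C \<noteq> 0" using a3 fI3 by (auto simp: q3_def)
    ultimately show ?thesis using a4
      unfolding good_def f1_def f2_def f3_def f4_def I3_def by (auto split: if_splits)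
  qed
  ultimately show ?thesis by blast
qed




lemma zclosure_mem: "p \<in> polyfun V \<Longrightarrow> x \<in> zclosure V S \<Longrightarrow> (\<And>y. y \<in> S \<Longrightarrow> p y = 0) \<Longrightarrow> p x = 0"
  unfolding zclosure_def by blast

lemma zclosure_sup: "x \<in> S \<Longrightarrow> x \<in> zclosure V S"
  unfolding zclosure_def by blast

lemma tdot_scale12: "tdot (a *s x) (M *v (b *s y)) = a * b * tdot x (M *v y)"
  by (simp add: mv_scale tdot_scale1 tdot_scale2)

lemma par_coeffs:
  fixes \<alpha> \<beta> \<alpha>' \<beta>' :: complex and u v :: "complex^'n"
  assumes "(\<alpha>, \<beta>) \<noteq> (0, 0)" "\<alpha> * \<beta>' = \<beta> * \<alpha>'"
  shows "\<exists>c. \<alpha>' *s u + \<beta>' *s v = c *s (\<alpha> *s u + \<beta> *s v)"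
proof (cases "\<alpha> = 0")
  case False
  have b': "\<beta>' = \<alpha>' * \<beta> / \<alpha>" using assms(2) False by (simp add: field_simps)
  have "\<alpha>' *s u + \<beta>' *s v = (\<alpha>' / \<alpha>) *s (\<alpha> *s u + \<beta> *s v)"
    using False by (simp add: vec_eq_iff b' field_simps)
  then show ?thesis by blast
next
  case True
  then have b: "\<beta> \<noteq> 0" using assms(1) by simp
  have a': "\<alpha>' = 0" using assms(2) True b by simp
  have "\<alpha>' *s u + \<beta>' *s v = (\<beta>' / \<beta>) *s (\<alpha> *s u + \<beta> *s v)"
    using True b by (simp add: vec_eq_iff a' field_simps)
  then show ?thesis by blast
qed

lemma cross_self': "tdot p (cross3c p q) = 0" "tdot q (cross3c p q) = 0"
  using cross_self[of p q] by (simp_all add: tdot_comm)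

lemma good_camline: "good m X u v R C \<Longrightarrow> i < m \<Longrightarrow> cam_line (C i) u v \<noteq> 0"
  unfolding good_def by force

lemma part1:
  assumes g: "good m X u v R C" and m2: "m \<ge> 2" and li: "lin_indep2 u v" and xnz: "\<forall>i<m. x i \<noteq> 0"
  shows "x \<in> M_L m C u v \<longleftrightarrow>
    (\<forall>j. 1 \<le> j \<and> j < m \<longrightarrow> tdot (x 0) (fundamental (C 0) (C j) *v x j) = 0) \<and>
    (\<forall>i<m. tdot (x i) (cam_line (C i) u v) = 0)"
proof
  assume xM: "x \<in> M_L m C u v"
  then have xz: "x \<in> zclosure (img_coords m) (point_image_cone m C u v)"
    by (simp add: M_L_def multiproj_closure_def)
  have A: "tdot (x 0) (fundamental (C 0) (C j) *v x j) = 0" if j: "1 \<le> j" "j < m" for j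
  proof (rule zclosure_mem[OF _ xz])
    show "(\<lambda>y. tdot (y 0) (fundamental (C 0) (C j) *v y j)) \<in> polyfun (img_coords m)"
      using j m2 by (intro polyfun_tdot polyfun_mv img_var polyfun_constm) auto
    fix y assume "y \<in> point_image_cone m C u v"
    then obtain Y where Y: "\<forall>i<m. C i *v Y \<noteq> 0 \<and> (\<exists>c. c \<noteq> 0 \<and> y i = c *s (C i *v Y))"
      unfolding point_image_cone_def by blast
    obtain c0 where c0: "y 0 = c0 *s (C 0 *v Y)" using Y m2 by force
    obtain cj where cj: "y j = cj *s (C j *v Y)" using Y j by force
    show "tdot (y 0) (fundamental (C 0) (C j) *v y j) = 0"
      by (simp add: c0 cj tdot_scale12 epi det4_rep)
  qed
  have B: "tdot (x i) (cam_line (C i) u v) = 0" if i: "i < m" for i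
  proof (rule zclosure_mem[OF _ xz])
    show "(\<lambda>y. tdot (y i) (cam_line (C i) u v)) \<in> polyfun (img_coords m)"
      using i by (intro polyfun_tdot img_var polyfun_constv)
    fix y assume "y \<in> point_image_cone m C u v"
    then obtain Y where Y: "in_span2 Y u v" "\<forall>i<m. C i *v Y \<noteq> 0 \<and> (\<exists>c. c \<noteq> 0 \<and> y i = c *s (C i *v Y))"
      unfolding point_image_cone_def by blast
    obtain a b where ab: "Y = a *s u + b *s v" using Y(1) unfolding in_span2_def by blast
    obtain c where c: "y i = c *s (C i *v Y)" using Y(2) i by force
    show "tdot (y i) (cam_line (C i) u v) = 0"
      by (simp add: c ab mv_lin tdot_scale1 tdot_lin1 cam_line_def cross_self')
  qed
  show "(\<forall>j. 1 \<le> j \<and> j < m \<longrightarrow> tdot (x 0) (fundamental (C 0) (C j) *v x j) = 0) \<and>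
    (\<forall>i<m. tdot (x i) (cam_line (C i) u v) = 0)" using A B by blast
next
  assume H: "(\<forall>j. 1 \<le> j \<and> j < m \<longrightarrow> tdot (x 0) (fundamental (C 0) (C j) *v x j) = 0) \<and>
    (\<forall>i<m. tdot (x i) (cam_line (C i) u v) = 0)"
  have m0: "0 < m" using m2 by simp
  have n0: "cross3c (C 0 *v u) (C 0 *v v) \<noteq> 0" using good_camline[OF g m0] by (simp add: cam_line_def)
  have t0: "tdot (x 0) (cross3c (C 0 *v u) (C 0 *v v)) = 0" using H m0 by (simp add: cam_line_def)
  obtain \<alpha> \<beta> where ab: "x 0 = \<alpha> *s (C 0 *v u) + \<beta> *s (C 0 *v v)"
    using in_plane[OF n0 t0] by blast
  define Y where "Y = \<alpha> *s u + \<beta> *s v"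
  have CY0: "C 0 *v Y = x 0" by (simp add: Y_def mv_lin ab)
  have Y0: "Y \<noteq> 0" using CY0 xnz m0 by auto
  have abnz: "(\<alpha>, \<beta>) \<noteq> (0, 0)" using Y0 by (auto simp: Y_def)
  have CYnz: "C i *v Y \<noteq> 0" if i: "i < m" for i
  proof
    assume "C i *v Y = 0"
    then have "\<alpha> *s (C i *v u) + \<beta> *s (C i *v v) = 0" by (simp add: Y_def mv_lin)
    then have "cross3c (C i *v u) (C i *v v) = 0" using cross_dep0 abnz by blast
    then show False using good_camline[OF g i] by (simp add: cam_line_def)
  qed
  have par: "\<exists>c. c \<noteq> 0 \<and> x i = c *s (C i *v Y)" if i: "i < m" for i
  proof (cases "i = 0")
    case True then show ?thesis using CY0 by (intro exI[of _ 1]) simp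
  next
    case False
    have ni: "cross3c (C i *v u) (C i *v v) \<noteq> 0" using good_camline[OF g i] by (simp add: cam_line_def)
    have ti: "tdot (x i) (cross3c (C i *v u) (C i *v v)) = 0" using H i by (simp add: cam_line_def)
    obtain \<alpha>' \<beta>' where ab': "x i = \<alpha>' *s (C i *v u) + \<beta>' *s (C i *v v)"
      using in_plane[OF ni ti] by blast
    define W where "W = \<alpha>' *s u + \<beta>' *s v"
    have CW: "C i *v W = x i" by (simp add: W_def mv_lin ab')
    have "tdot (x 0) (fundamental (C 0) (C i) *v x i) = 0" using H i False by auto
    then have "det4 (cen (C 0)) Y (cen (C i)) W = 0" by (simp add: CY0[symmetric] CW[symmetric] epi)
    then have "(\<alpha> * \<beta>' - \<beta> * \<alpha>') * det4 (cen (C 0)) u (cen (C i)) v = 0"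
      by (simp add: Y_def W_def det4_bilin_uv)
    moreover have "det4 (cen (C 0)) u (cen (C i)) v \<noteq> 0" using g i False unfolding good_def by auto
    ultimately have "\<alpha> * \<beta>' = \<beta> * \<alpha>'" by simp
    then obtain c where c: "W = c *s Y" using par_coeffs[OF abnz] unfolding W_def Y_def by blast
    have xi: "x i = c *s (C i *v Y)" using CW c by (simp add: mv_scale)
    then have "c \<noteq> 0" using xnz i by auto
    then show ?thesis using xi by blast
  qed
  have "x \<in> point_image_cone m C u v"
    unfolding point_image_cone_def in_span2_def using Y0 CYnz par by (auto simp: Y_def)
  then have "x \<in> zclosure (img_coords m) (point_image_cone m C u v)" by (rule zclosure_sup)
  then show "x \<in> M_L m C u v"
    unfolding M_L_def multiproj_closure_def using xnz by simp
qed




lemma tdot_diff2: "tdot z (x - y) = tdot z x - tdot z y"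
  by (simp add: tdot_def sum_subtractf algebra_simps)

lemma det4_rep_scaled: "det4 (g *s p) p q R = 0" "det4 (g *s q) p q R = 0"
  by (simp add: det4_expand; algebra)+

lemma good_H3:
  assumes g: "good m X u v R C" and i: "i < m" and k: "k < m" and ik: "i \<noteq> k"
  shows "det4 X (cen (C i)) (cen (C k)) R \<noteq> 0"
proof (cases "i < k")
  case True then show ?thesis using g k unfolding good_def by blast
next
  case False
  then have "k < i" using ik by simp
  then have "det4 X (cen (C k)) (cen (C i)) R \<noteq> 0" using g i unfolding good_def by blast
  then show ?thesis by (simp add: det4_swap23[of X "cen (C i)"])
qed

lemma other_idx: "(m::nat) \<ge> 2 \<Longrightarrow> i < m \<Longrightarrow> \<exists>k<m. k \<noteq> i"
  by (cases "i = 0") (rule exI[of _ 1], simp, rule exI[of _ 0], simp)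

lemma good_cen:
  assumes g: "good m X u v R C" and m2: "m \<ge> 2" and i: "i < m"
  shows "cen (C i) \<noteq> 0"
proof
  assume c: "cen (C i) = 0"
  obtain k where k: "k < m" "k \<noteq> i" using other_idx[OF m2 i] by blast
  have "det4 X (cen (C i)) (cen (C k)) R \<noteq> 0" using good_H3[OF g i k(1)] k(2) by simp
  then show False using c by (simp add: det4_zero2)
qed

lemma good_CX:
  assumes g: "good m X u v R C" and m2: "m \<ge> 2" and i: "i < m"
  shows "C i *v X \<noteq> 0"
proof
  assume c: "C i *v X = 0"
  obtain k where k: "k < m" "k \<noteq> i" using other_idx[OF m2 i] by blast
  obtain \<gamma> where "X = \<gamma> *s cen (C i)" using cen_kernel[OF good_cen[OF g m2 i] c] by blast
  then have "det4 X (cen (C i)) (cen (C k)) R = 0" by (simp add: det4_rep_scaled)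
  then show False using good_H3[OF g i k(1)] k(2) by simp
qed

lemma kill2:
  assumes li: "lin_indep2 u' v'" and h: "tdot a u' = 0" "tdot b u' = 0" "tdot c u' = 0"
    "tdot a v' = 0" "tdot b v' = 0" "tdot c v' = 0"
  shows "det4 a b c d = 0"
proof (rule ccontr)
  assume D: "det4 a b c d \<noteq> 0"
  have "tdot d v' *s u' + (- tdot d u') *s v' = 0"
    by (rule kill4[OF D]) (simp_all add: tdot_lin2 h tdot_diff2 tdot_scale2)
  then have "tdot d v' = 0 \<and> - tdot d u' = 0" using li unfolding lin_indep2_def by blast
  then have "u' = 0" by (intro kill4[OF D]) (auto simp: h)
  then show False using li2_nz[OF li] by simp
qed

definition dep2 :: "complex^4 \<Rightarrow> complex^4 \<Rightarrow> bool" where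
  "dep2 a b \<longleftrightarrow> (\<exists>s t. (s, t) \<noteq> (0, 0) \<and> s *s a + t *s b = 0)"

lemma KY:
  assumes nd: "\<not> cols_dependent3 Q1 Q2 W" and WX: "tdot W X \<noteq> 0"
  shows "\<exists>Y. tdot Q1 Y = 0 \<and> tdot Q2 Y = 0 \<and> lin_indep2 X Y"
proof -
  obtain d where d: "det4 Q1 Q2 W d \<noteq> 0" using core_hard[OF nd] by blast
  define Y where "Y = kvec Q1 Q2 W"
  have Yd: "tdot Y z = det4 Q1 Q2 W z" for z by (simp add: Y_def kvec_dot)
  have Q1Y: "tdot Q1 Y = 0" using Yd[of Q1] by (simp add: tdot_comm det4_rep)
  have Q2Y: "tdot Q2 Y = 0" using Yd[of Q2] by (simp add: tdot_comm det4_rep)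
  have WY: "tdot W Y = 0" using Yd[of W] by (simp add: tdot_comm det4_rep)
  have Y0: "Y \<noteq> 0" using Yd[of d] d by auto
  have "lin_indep2 X Y" unfolding lin_indep2_def
  proof (intro allI impI)
    fix a b assume e: "a *s X + b *s Y = 0"
    then have "tdot W (a *s X + b *s Y) = 0" by simp
    then have "a * tdot W X = 0" by (simp add: tdot_lin2 WY)
    then have a0: "a = 0" using WX by simp
    then have "b *s Y = 0" using e by simp
    then have "b = 0" using Y0 by (simp add: vector_mul_eq_0)
    then show "a = 0 \<and> b = 0" using a0 by simp
  qed
  then show ?thesis using Q1Y Q2Y by blast
qed

lemma X_axis: "X \<noteq> (0::complex^4) \<Longrightarrow> \<exists>k. tdot (axis k 1) X \<noteq> 0"
  by (auto simp: tdot_axis vec_eq_iff)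

lemma FindY2:
  assumes nd: "\<not> dep2 Q1 Q2" and h: "tdot Q1 X = 0" "tdot Q2 X = 0" and X0: "X \<noteq> 0"
  shows "\<exists>Y. tdot Q1 Y = 0 \<and> tdot Q2 Y = 0 \<and> lin_indep2 X Y"
proof -
  obtain k where k: "tdot (axis k 1) X \<noteq> 0" using X_axis[OF X0] by blast
  have "\<not> cols_dependent3 Q1 Q2 (axis k 1)"
  proof
    assume "cols_dependent3 Q1 Q2 (axis k 1)"
    then obtain s t w where st: "(s, t, w) \<noteq> (0, 0, 0)" "s *s Q1 + t *s Q2 + w *s axis k 1 = 0"
      unfolding cols_dependent3_def by blast
    have "tdot (s *s Q1 + t *s Q2 + w *s axis k 1) X = 0" using st(2) by simp
    then have "w * tdot (axis k 1) X = 0" by (simp add: tdot_add1 tdot_scale1 h)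
    then have w0: "w = 0" using k by simp
    then have "s *s Q1 + t *s Q2 = 0" "(s, t) \<noteq> (0, 0)" using st by auto
    then show False using nd unfolding dep2_def by blast
  qed
  then show ?thesis using KY k by blast
qed

lemma FindY1:
  assumes Q0: "Q \<noteq> 0" and h: "tdot Q X = 0" and X0: "X \<noteq> 0"
  shows "\<exists>Y. tdot Q Y = 0 \<and> lin_indep2 X Y"
proof -
  obtain k where k: "tdot (axis k 1) X \<noteq> 0" using X_axis[OF X0] by blast
  have "card {Q, axis k 1} < 4" by (simp add: card_insert_if)
  then obtain V where V: "V \<notin> vec.span {Q, axis k 1}" using span_ne[of "{Q, axis k 1}"] by auto
  have "\<not> cols_dependent3 Q V (axis k 1)"
  proof
    assume "cols_dependent3 Q V (axis k 1)"
    then obtain s t w where st: "(s, t, w) \<noteq> (0, 0, 0)" "s *s Q + t *s V + w *s axis k 1 = 0"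
      unfolding cols_dependent3_def by blast
    show False
    proof (cases "t = 0")
      case True
      have "tdot (s *s Q + t *s V + w *s axis k 1) X = 0" using st(2) by simp
      then have "w * tdot (axis k 1) X = 0" using True by (simp add: tdot_add1 tdot_scale1 h)
      then have w0: "w = 0" using k by simp
      then have "s *s Q = 0" using st(2) True by simp
      then have "s = 0" using Q0 by (simp add: vector_mul_eq_0)
      then show False using st(1) True w0 by simp
    next
      case False
      have "t *s V + (s *s Q + w *s axis k 1) = 0" using st(2) by (simp add: algebra_simps)
      then have "t *s V = - (s *s Q + w *s axis k 1)" using eq_neg_iff_add_eq_0[of "t *s V" "s *s Q + w *s axis k 1"] by blast
      then have "V = (- 1 / t) *s (s *s Q + w *s axis k 1)"
      proof -
        assume e: "t *s V = - (s *s Q + w *s axis k 1)"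
        have "(1 / t) *s (t *s V) = (1 / t) *s (- (s *s Q + w *s axis k 1))" using e by simp
        then show ?thesis using False by (simp add: vector_smult_assoc)
      qed
      moreover have "(- 1 / t) *s (s *s Q + w *s axis k 1) \<in> vec.span {Q, axis k 1}"
        by (intro vec.span_scale vec.span_add) (auto intro: vec.span_base)
      ultimately show False using V by simp
    qed
  qed
  then show ?thesis using KY k by blast
qed

lemma dep3_kill:
  assumes d: "cols_dependent3 a b c" and nd: "\<not> dep2 a b" and h: "tdot a Y = 0" "tdot b Y = 0"
  shows "tdot c Y = 0"
proof -
  obtain s t w where st: "(s, t, w) \<noteq> (0, 0, 0)" "s *s a + t *s b + w *s c = 0"
    using d unfolding cols_dependent3_def by blast
  have w0: "w \<noteq> 0"
  proof
    assume "w = 0"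
    then have "s *s a + t *s b = 0" "(s, t) \<noteq> (0, 0)" using st by auto
    then show False using nd unfolding dep2_def by blast
  qed
  have "tdot (s *s a + t *s b + w *s c) Y = 0" using st(2) by simp
  then have "w * tdot c Y = 0" by (simp add: tdot_add1 tdot_scale1 h)
  then show ?thesis using w0 by simp
qed

lemma dep2_kill:
  assumes d: "dep2 a b" and a0: "a \<noteq> 0" and b0: "b \<noteq> 0" and h: "tdot a Y = 0"
  shows "tdot b Y = 0"
proof -
  obtain s t where st: "(s, t) \<noteq> (0, 0)" "s *s a + t *s b = 0" using d unfolding dep2_def by blast
  have t0: "t \<noteq> 0"
  proof
    assume "t = 0" then have "s *s a = 0" "s \<noteq> 0" using st by auto
    then show False using a0 by (simp add: vector_mul_eq_0)
  qed
  have "tdot (s *s a + t *s b) Y = 0" using st(2) by simp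
  then have "t * tdot b Y = 0" by (simp add: tdot_add1 tdot_scale1 h)
  then show ?thesis using t0 by simp
qed

lemma dep2_sym: "dep2 a b \<Longrightarrow> dep2 b a"
proof -
  assume "dep2 a b"
  then obtain s t where st: "(s, t) \<noteq> (0, 0)" "s *s a + t *s b = 0" unfolding dep2_def by blast
  then have "(t, s) \<noteq> (0, 0)" "t *s b + s *s a = 0" by (auto simp: add.commute)
  then show "dep2 b a" unfolding dep2_def by blast
qed




lemma common_line:
  assumes g: "good m X u v R C" and m2: "m \<ge> 2" and X0: "X \<noteq> 0"
    and lnz: "\<forall>i<m. l i \<noteq> 0"
    and D: "\<forall>i. 2 \<le> i \<and> i < m \<longrightarrow>
       cols_dependent3 (transpose (C 0) *v l 0) (transpose (C 1) *v l 1) (transpose (C i) *v l i) \<and>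
       cols_dependent3 (transpose (C 0) *v l 0) (transpose (C 2) *v l 2) (transpose (C i) *v l i)"
    and LX: "\<forall>i<m. tdot (l i) (C i *v X) = 0"
  shows "\<exists>Y. (\<forall>i<m. tdot (l i) (C i *v Y) = 0) \<and> lin_indep2 X Y"
proof -
  define P where "P = (\<lambda>i. transpose (C i) *v l i)"
  have P0: "P i \<noteq> 0" if "i < m" for i
    using cen_nz_inj[OF good_cen[OF g m2 that]] lnz that by (auto simp: P_def)
  have PX: "tdot (P i) X = 0" if "i < m" for i using LX that by (simp add: P_def tdot_transpose)
  have conv: "tdot (l i) (C i *v Y) = tdot (P i) Y" for i Y by (simp add: P_def tdot_transpose)
  have D': "cols_dependent3 (P 0) (P 1) (P i) \<and> cols_dependent3 (P 0) (P 2) (P i)" if "2 \<le> i" "i < m" for i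
    using D that by (simp add: P_def)
  have m0: "0 < m" "1 < m" using m2 by auto
  have "\<exists>Y. (\<forall>i<m. tdot (P i) Y = 0) \<and> lin_indep2 X Y"
  proof (cases "dep2 (P 0) (P 1)")
    case False
    obtain Y where Y: "tdot (P 0) Y = 0" "tdot (P 1) Y = 0" "lin_indep2 X Y"
      using FindY2[OF False PX[OF m0(1)] PX[OF m0(2)] X0] by blast
    have "tdot (P i) Y = 0" if i: "i < m" for i
    proof -
      consider "i = 0" | "i = 1" | "2 \<le> i" by linarith
      then show ?thesis
      proof cases
        case 1 then show ?thesis using Y by simp
      next
        case 2 then show ?thesis using Y by simp
      next
        case 3 show ?thesis by (rule dep3_kill[OF conjunct1[OF D'[OF 3 i]] False Y(1,2)])
      qed
    qed
    then show ?thesis using Y(3) by blast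
  next
    case True
    note d01 = True
    show ?thesis
    proof (cases "3 \<le> m")
      case m3: True
      have m2': "2 < m" using m3 by simp
      show ?thesis
      proof (cases "dep2 (P 0) (P 2)")
        case nd02: False
        obtain Y where Y: "tdot (P 0) Y = 0" "tdot (P 2) Y = 0" "lin_indep2 X Y"
          using FindY2[OF nd02 PX[OF m0(1)] PX[OF m2'] X0] by blast
        have "tdot (P i) Y = 0" if i: "i < m" for i
        proof -
          consider "i = 0" | "i = 1" | "2 \<le> i" by linarith
          then show ?thesis
          proof cases
            case 1 then show ?thesis using Y by simp
          next
            case 2 then show ?thesis using dep2_kill[OF d01 P0[OF m0(1)] P0[OF m0(2)] Y(1)] by simp
          next
            case 3 show ?thesis by (rule dep3_kill[OF conjunct2[OF D'[OF 3 i]] nd02 Y(1,2)])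
          qed
        qed
        then show ?thesis using Y(3) by blast
      next
        case d02: True
        have k0: "tdot (P 0) (cen (C 0)) = 0" unfolding P_def tdot_transpose[symmetric] C_cen by simp
        have k1': "tdot (P 1) (cen (C 1)) = 0" unfolding P_def tdot_transpose[symmetric] C_cen by simp
        have k2': "tdot (P 2) (cen (C 2)) = 0" unfolding P_def tdot_transpose[symmetric] C_cen by simp
        have k1: "tdot (P 0) (cen (C 1)) = 0"
          using dep2_kill[OF dep2_sym[OF d01] P0[OF m0(2)] P0[OF m0(1)] k1'] .
        have k2: "tdot (P 0) (cen (C 2)) = 0"
          using dep2_kill[OF dep2_sym[OF d02] P0[OF m2'] P0[OF m0(1)] k2'] .
        have dd: "det4 (cen (C 0)) (cen (C 1)) (cen (C 2)) X \<noteq> 0" using g m3 by (simp add: good_def)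
        have "P 0 = 0"
          by (rule kill4[OF dd]) (use k0 k1 k2 PX[OF m0(1)] in \<open>simp_all add: tdot_comm\<close>)
        then show ?thesis using P0[OF m0(1)] by simp
      qed
    next
      case False
      then have mm: "m = 2" using m2 by simp
      obtain Y where Y: "tdot (P 0) Y = 0" "lin_indep2 X Y"
        using FindY1[OF P0[OF m0(1)] PX[OF m0(1)] X0] by blast
      have Y1: "tdot (P 1) Y = 0" using dep2_kill[OF d01 P0[OF m0(1)] P0[OF m0(2)] Y(1)] .
      have "tdot (P i) Y = 0" if "i < m" for i
      proof -
        have "i = 0 \<or> i = 1" using that mm by auto
        then show ?thesis using Y(1) Y1 by auto
      qed
      then show ?thesis using Y(2) by blast
    qed
  qed
  then show ?thesis by (simp add: conv)
qed

lemma two_centers: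
  assumes g: "good m X u v R C" and m2: "m \<ge> 2" and i: "i < m" and k: "k < m" and ik: "i \<noteq> k"
    and li: "lin_indep2 X Y" and ni: "cam_line (C i) X Y = 0" and nk: "cam_line (C k) X Y = 0"
  shows False
proof -
  have aux: "\<exists>a b \<gamma>. \<gamma> \<noteq> 0 \<and> a *s X + b *s Y = \<gamma> *s cen (C j)" if j: "j < m" "cam_line (C j) X Y = 0" for j
  proof -
    obtain a b where ab: "(a, b) \<noteq> (0, 0)" "a *s (C j *v X) + b *s (C j *v Y) = 0"
      using cross_zero_dep[of "C j *v X" "C j *v Y"] j(2) by (auto simp: cam_line_def)
    have "C j *v (a *s X + b *s Y) = 0" using ab(2) by (simp add: mv_lin)
    then obtain \<gamma> where ga: "a *s X + b *s Y = \<gamma> *s cen (C j)"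
      using cen_kernel[OF good_cen[OF g m2 j(1)]] by blast
    have "a *s X + b *s Y \<noteq> 0" using li ab(1) unfolding lin_indep2_def by auto
    then have "\<gamma> \<noteq> 0" using ga by auto
    then show ?thesis using ga by blast
  qed
  obtain a b \<gamma> where A: "\<gamma> \<noteq> 0" "a *s X + b *s Y = \<gamma> *s cen (C i)" using aux[OF i ni] by blast
  obtain a' b' \<gamma>' where B: "\<gamma>' \<noteq> 0" "a' *s X + b' *s Y = \<gamma>' *s cen (C k)" using aux[OF k nk] by blast
  have "det4 X (\<gamma> *s cen (C i)) (\<gamma>' *s cen (C k)) R = 0"
    using det4_span0[of X a b Y a' b' R] A B by simp
  then have "\<gamma> * \<gamma>' * det4 X (cen (C i)) (cen (C k)) R = 0" by (simp add: det4_scale23)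
  then show False using A(1) B(1) good_H3[OF g i k ik] by simp
qed




lemma closure_from_line:
  assumes g: "good m X u v R C" and m2: "m \<ge> 2" and X0: "X \<noteq> 0" and lnz: "\<forall>i<m. l i \<noteq> 0"
    and liXY: "lin_indep2 X Y"
    and hX: "\<forall>i<m. tdot (l i) (C i *v X) = 0" and hY: "\<forall>i<m. tdot (l i) (C i *v Y) = 0"
  shows "l \<in> zclosure (img_coords m) (line_image_cone m C X)"
proof -
  define n where "n = (\<lambda>i. cam_line (C i) X Y)"
  have npar: "\<exists>c. c \<noteq> 0 \<and> l i = c *s n i" if i: "i < m" "n i \<noteq> 0" for i
  proof -
    have nz: "cross3c (C i *v X) (C i *v Y) \<noteq> 0" using i(2) by (simp add: n_def cam_line_def)
    have "tdot (l i) (C i *v X) = 0" "tdot (l i) (C i *v Y) = 0" using hX hY i(1) by auto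
    then obtain c where c: "l i = c *s cross3c (C i *v X) (C i *v Y)"
      using line_par[OF nz] by blast
    then have "c \<noteq> 0" using lnz i(1) by auto
    then show ?thesis using c by (auto simp: n_def cam_line_def)
  qed
  show ?thesis
  proof (cases "\<forall>i<m. n i \<noteq> 0")
    case True
    have "l \<in> line_image_cone m C X"
      unfolding line_image_cone_def
    proof (intro CollectI exI conjI)
      show "lin_indep2 X Y" by (rule liXY)
      show "in_span2 X X Y" unfolding in_span2_def by (intro exI[of _ 1] exI[of _ 0]) simp
      show "\<forall>i<m. cam_line (C i) X Y \<noteq> 0 \<and> (\<exists>c. c \<noteq> 0 \<and> l i = c *s cam_line (C i) X Y)"
        using True npar by (simp add: n_def)
    qed
    then show ?thesis by (rule zclosure_sup)
  next
    case False
    then obtain k where k: "k < m" "n k = 0" by blast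
    have uniq: "n i \<noteq> 0" if "i < m" "i \<noteq> k" for i
      using two_centers[OF g m2 that(1) k(1) that(2) liXY] k(2) by (auto simp: n_def)
    define p where "p = C k *v X"
    have p0: "p \<noteq> 0" using good_CX[OF g m2 k(1)] by (simp add: p_def)
    obtain j where j: "p $ j \<noteq> 0" using p0 by (auto simp: vec_eq_iff)
    define z where "z = cross3c (l k) (axis j 1)"
    have pl: "tdot p (l k) = 0" using hX k(1) by (simp add: p_def tdot_comm)
    have pz: "cross3c p z = p $ j *s l k" by (simp add: z_def bac_cab tdot_axis pl)
    obtain Z where Z: "C k *v Z = z" using cen_surj[OF good_cen[OF g m2 k(1)]] by blast
    define w where "w = (\<lambda>i. cam_line (C i) X Z)"
    have lin: "cam_line (C i) X (Y + t *s Z) = n i + t *s w i" for i t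
      by (simp add: n_def w_def cam_line_def mv_add cross_add2)
    have wk: "w k = p $ j *s l k" by (simp add: w_def cam_line_def Z p_def[symmetric] pz)
    have "\<forall>i. \<exists>ci. i < m \<and> i \<noteq> k \<longrightarrow> ci \<noteq> 0 \<and> l i = ci *s n i"
      using npar uniq by blast
    then obtain c where c: "\<And>i. i < m \<Longrightarrow> i \<noteq> k \<Longrightarrow> c i \<noteq> 0 \<and> l i = c i *s n i"
      using choice[of "\<lambda>i ci. i < m \<and> i \<noteq> k \<longrightarrow> ci \<noteq> 0 \<and> l i = ci *s n i"] by blast
    define lt where "lt = (\<lambda>t::complex. \<lambda>i. if i = k then l k else c i *s (n i + t *s w i))"
    have ev_i: "eventually (\<lambda>t. n i + t *s w i \<noteq> 0) (at (0::complex))" if i: "i \<in> {..<m} - {k}" for i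
    proof -
      have "n i \<noteq> 0" using uniq i by auto
      then obtain r where r: "n i $ r \<noteq> 0" by (auto simp: vec_eq_iff)
      have "((\<lambda>t. n i $ r + t * w i $ r) \<longlongrightarrow> n i $ r + 0 * w i $ r) (at (0::complex))"
        by (intro tendsto_intros)
      then have "((\<lambda>t. n i $ r + t * w i $ r) \<longlongrightarrow> n i $ r) (at (0::complex))" by simp
      then have "eventually (\<lambda>t. n i $ r + t * w i $ r \<noteq> 0) (at (0::complex))"
        using r by (rule tendsto_imp_eventually_ne)
      then show ?thesis
      proof eventually_elim
        case (elim t)
        then show ?case by (auto simp: vec_eq_iff)
      qed
    qed
    have ev_all: "eventually (\<lambda>t. \<forall>i\<in>{..<m} - {k}. n i + t *s w i \<noteq> 0) (at (0::complex))"
      by (rule eventually_ball_finite) (use ev_i in auto)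
    have ev_t: "eventually (\<lambda>t::complex. t \<noteq> 0) (at 0)" by (simp add: eventually_at_filter)
    have ev_cone: "eventually (\<lambda>t. lt t \<in> line_image_cone m C X) (at 0)"
      using ev_all ev_t
    proof eventually_elim
      case (elim t)
      have ck: "cam_line (C k) X (Y + t *s Z) = (t * p $ j) *s l k" using lin[of k t] k(2) wk
        by (simp add: vector_smult_assoc)
      have lk0: "l k \<noteq> 0" using lnz k(1) by simp
      have tp: "t * p $ j \<noteq> 0" using elim(2) j by simp
      have cknz: "cam_line (C k) X (Y + t *s Z) \<noteq> 0" using ck tp lk0 by (simp add: vector_mul_eq_0)
      have all: "\<forall>i<m. cam_line (C i) X (Y + t *s Z) \<noteq> 0 \<and> (\<exists>c. c \<noteq> 0 \<and> lt t i = c *s cam_line (C i) X (Y + t *s Z))"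
      proof (intro allI impI)
        fix i assume i: "i < m"
        show "cam_line (C i) X (Y + t *s Z) \<noteq> 0 \<and> (\<exists>c. c \<noteq> 0 \<and> lt t i = c *s cam_line (C i) X (Y + t *s Z))"
        proof (cases "i = k")
          case True
          have "lt t k = (1 / (t * p $ j)) *s ((t * p $ j) *s l k)" using tp
            by (simp add: lt_def vector_smult_assoc)
          then have "lt t k = (1 / (t * p $ j)) *s cam_line (C k) X (Y + t *s Z)" using ck by simp
          moreover have "1 / (t * p $ j) \<noteq> 0" using tp by simp
          ultimately show ?thesis using True cknz by blast
        next
          case False
          have "lt t i = c i *s (n i + t *s w i)" using False by (simp add: lt_def)
          then have "lt t i = c i *s cam_line (C i) X (Y + t *s Z)" using lin[of i t] by simp
          moreover have "cam_line (C i) X (Y + t *s Z) \<noteq> 0" using elim(1) i False lin[of i t] by auto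
          ultimately show ?thesis using c[OF i False] by blast
        qed
      qed
      have "in_span2 X X (Y + t *s Z)" unfolding in_span2_def by (intro exI[of _ 1] exI[of _ 0]) simp
      then show ?case unfolding line_image_cone_def using camline_li[OF cknz] all by blast
    qed
    have tends: "((\<lambda>t. f (lt t)) \<longlongrightarrow> f l) (at 0)" if f: "f \<in> img_coords m" for f
    proof -
      obtain i r where fi: "f = (\<lambda>x. x i $ r)" "i < m" using f unfolding img_coords_def by blast
      show ?thesis
      proof (cases "i = k")
        case True then show ?thesis by (simp add: fi lt_def)
      next
        case False
        have e1: "(\<lambda>t. f (lt t)) = (\<lambda>t. c i * (n i $ r + t * w i $ r))"
          by (rule ext) (simp add: fi lt_def False algebra_simps)
        have e2: "f l = c i * (n i $ r + 0 * w i $ r)" using c[OF fi(2) False] by (simp add: fi)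
        show ?thesis unfolding e1 e2 by (intro tendsto_intros)
      qed
    qed
    show ?thesis unfolding zclosure_def
    proof (intro CollectI ballI impI)
      fix pp assume pp: "pp \<in> polyfun (img_coords m)" and van: "\<forall>y\<in>line_image_cone m C X. pp y = 0"
      have T: "((\<lambda>t. pp (lt t)) \<longlongrightarrow> pp l) (at 0)" by (rule polyfun_tendsto[OF pp tends])
      have "eventually (\<lambda>t. pp (lt t) = 0) (at 0)"
        using ev_cone by eventually_elim (use van in auto)
      then have "((\<lambda>t. pp (lt t)) \<longlongrightarrow> 0) (at 0)" by (rule tendsto_eventually)
      then show "pp l = 0" using tendsto_unique[OF at_neq_bot T] by simp
    qed
  qed
qed




lemma cone_kill:
  assumes y: "y \<in> line_image_cone m C X"
  shows "\<exists>u' v'. lin_indep2 u' v' \<and> in_span2 X u' v' \<and>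
     (\<forall>k<m. tdot (transpose (C k) *v y k) u' = 0 \<and> tdot (transpose (C k) *v y k) v' = 0 \<and>
        tdot (y k) (C k *v X) = 0)"
proof -
  obtain u' v' where uv: "lin_indep2 u' v'" "in_span2 X u' v'"
    "\<forall>i<m. cam_line (C i) u' v' \<noteq> 0 \<and> (\<exists>c. c \<noteq> 0 \<and> y i = c *s cam_line (C i) u' v')"
    using y unfolding line_image_cone_def by blast
  obtain a b where ab: "X = a *s u' + b *s v'" using uv(2) unfolding in_span2_def by blast
  have "tdot (transpose (C k) *v y k) u' = 0 \<and> tdot (transpose (C k) *v y k) v' = 0 \<and>
        tdot (y k) (C k *v X) = 0" if k: "k < m" for k
  proof -
    obtain c where c: "y k = c *s cam_line (C k) u' v'" using uv(3) k by blast
    show ?thesis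
      unfolding tdot_transpose[symmetric] c ab
      by (simp add: tdot_scale1 mv_lin tdot_lin2 cam_line_def cross_self)
  qed
  then show ?thesis using uv(1,2) by blast
qed

lemma dep_closure:
  assumes lz: "l \<in> zclosure (img_coords m) (line_image_cone m C X)" and a: "a < m" and b: "b < m" and c: "c < m"
  shows "cols_dependent3 (transpose (C a) *v l a) (transpose (C b) *v l b) (transpose (C c) *v l c)"
proof (rule ccontr)
  assume "\<not> ?thesis"
  then obtain d where d: "det4 (transpose (C a) *v l a) (transpose (C b) *v l b) (transpose (C c) *v l c) d \<noteq> 0"
    using core_hard by blast
  have "det4 (transpose (C a) *v l a) (transpose (C b) *v l b) (transpose (C c) *v l c) d = 0"
  proof (rule zclosure_mem[OF _ lz, where p = "\<lambda>y. det4 (transpose (C a) *v y a) (transpose (C b) *v y b) (transpose (C c) *v y c) d"])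
    show "(\<lambda>y. det4 (transpose (C a) *v y a) (transpose (C b) *v y b) (transpose (C c) *v y c) d) \<in> polyfun (img_coords m)"
      using a b c by (intro polyfun_det4 polyfun_mv img_var polyfun_constm polyfun_constv)
    fix y assume y: "y \<in> line_image_cone m C X"
    obtain u' v' where uv: "lin_indep2 u' v'"
      "\<forall>k<m. tdot (transpose (C k) *v y k) u' = 0 \<and> tdot (transpose (C k) *v y k) v' = 0"
      using cone_kill[OF y] by blast
    show "det4 (transpose (C a) *v y a) (transpose (C b) *v y b) (transpose (C c) *v y c) d = 0"
      using uv(2) a b c by (intro kill2[OF uv(1)]) auto
  qed
  then show False using d by simp
qed

lemma part2:
  assumes g: "good m X u v R C" and m2: "m \<ge> 2" and X0: "X \<noteq> 0" and lnz: "\<forall>i<m. l i \<noteq> 0"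
  shows "l \<in> L_X m C X \<longleftrightarrow>
    (\<forall>i. 2 \<le> i \<and> i < m \<longrightarrow>
       cols_dependent3 (transpose (C 0) *v l 0) (transpose (C 1) *v l 1) (transpose (C i) *v l i) \<and>
       cols_dependent3 (transpose (C 0) *v l 0) (transpose (C 2) *v l 2) (transpose (C i) *v l i)) \<and>
    (\<forall>i<m. tdot (l i) (C i *v X) = 0)"
proof
  assume "l \<in> L_X m C X"
  then have lz: "l \<in> zclosure (img_coords m) (line_image_cone m C X)"
    by (simp add: L_X_def multiproj_closure_def)
  have A: "\<forall>i. 2 \<le> i \<and> i < m \<longrightarrow>
       cols_dependent3 (transpose (C 0) *v l 0) (transpose (C 1) *v l 1) (transpose (C i) *v l i) \<and>
       cols_dependent3 (transpose (C 0) *v l 0) (transpose (C 2) *v l 2) (transpose (C i) *v l i)"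
  proof (intro allI impI conjI)
    fix i assume i: "2 \<le> i \<and> i < m"
    then have "0 < m" "1 < m" "2 < m" "i < m" by auto
    then show "cols_dependent3 (transpose (C 0) *v l 0) (transpose (C 1) *v l 1) (transpose (C i) *v l i)"
      "cols_dependent3 (transpose (C 0) *v l 0) (transpose (C 2) *v l 2) (transpose (C i) *v l i)"
      using dep_closure[OF lz] by blast+
  qed
  have B: "\<forall>i<m. tdot (l i) (C i *v X) = 0"
  proof (intro allI impI)
    fix i assume i: "i < m"
    show "tdot (l i) (C i *v X) = 0"
    proof (rule zclosure_mem[OF _ lz, where p = "\<lambda>y. tdot (y i) (C i *v X)"])
      show "(\<lambda>y. tdot (y i) (C i *v X)) \<in> polyfun (img_coords m)"
        using i by (intro polyfun_tdot img_var polyfun_constv)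
      fix y assume y: "y \<in> line_image_cone m C X"
      show "tdot (y i) (C i *v X) = 0" using cone_kill[OF y] i by blast
    qed
  qed
  show "(\<forall>i. 2 \<le> i \<and> i < m \<longrightarrow>
       cols_dependent3 (transpose (C 0) *v l 0) (transpose (C 1) *v l 1) (transpose (C i) *v l i) \<and>
       cols_dependent3 (transpose (C 0) *v l 0) (transpose (C 2) *v l 2) (transpose (C i) *v l i)) \<and>
    (\<forall>i<m. tdot (l i) (C i *v X) = 0)" using A B by blast
next
  assume H: "(\<forall>i. 2 \<le> i \<and> i < m \<longrightarrow>
       cols_dependent3 (transpose (C 0) *v l 0) (transpose (C 1) *v l 1) (transpose (C i) *v l i) \<and>
       cols_dependent3 (transpose (C 0) *v l 0) (transpose (C 2) *v l 2) (transpose (C i) *v l i)) \<and>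
    (\<forall>i<m. tdot (l i) (C i *v X) = 0)"
  obtain Y where Y: "\<forall>i<m. tdot (l i) (C i *v Y) = 0" "lin_indep2 X Y"
    using common_line[OF g m2 X0 lnz conjunct1[OF H] conjunct2[OF H]] by blast
  have "l \<in> zclosure (img_coords m) (line_image_cone m C X)"
    by (rule closure_from_line[OF g m2 X0 lnz Y(2) conjunct2[OF H] Y(1)])
  then show "l \<in> L_X m C X" using lnz by (simp add: L_X_def multiproj_closure_def)
qed

theorem proposition1p5:
  fixes m :: nat and X u v :: "complex^4"
  assumes "m \<ge> 2" and "X \<noteq> 0" and "lin_indep2 u v"
  shows "generic_arr m (\<lambda>C.
      (\<forall>x. (\<forall>i<m. x i \<noteq> 0) \<longrightarrow>
         (x \<in> M_L m C u v \<longleftrightarrow>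
            (\<forall>j. 1 \<le> j \<and> j < m \<longrightarrow> tdot (x 0) (fundamental (C 0) (C j) *v x j) = 0) \<and>
            (\<forall>i<m. tdot (x i) (cam_line (C i) u v) = 0))) \<and>
      (\<forall>l. (\<forall>i<m. l i \<noteq> 0) \<longrightarrow>
         (l \<in> L_X m C X \<longleftrightarrow>
            (\<forall>i. 2 \<le> i \<and> i < m \<longrightarrow>
               cols_dependent3 (transpose (C 0) *v l 0) (transpose (C 1) *v l 1) (transpose (C i) *v l i) \<and>
               cols_dependent3 (transpose (C 0) *v l 0) (transpose (C 2) *v l 2) (transpose (C i) *v l i)) \<and>
            (\<forall>i<m. tdot (l i) (C i *v X) = 0))))"
proof -
  obtain R Z where Z: "zariski_closed (cam_coords m) Z" "Z \<noteq> UNIV" "\<forall>C. C \<notin> Z \<longrightarrow> good m X u v R C"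
    using generic_good[OF assms(1,2,3)] by blast
  have P: "(\<forall>x. (\<forall>i<m. x i \<noteq> 0) \<longrightarrow>
         (x \<in> M_L m C u v \<longleftrightarrow>
            (\<forall>j. 1 \<le> j \<and> j < m \<longrightarrow> tdot (x 0) (fundamental (C 0) (C j) *v x j) = 0) \<and>
            (\<forall>i<m. tdot (x i) (cam_line (C i) u v) = 0))) \<and>
      (\<forall>l. (\<forall>i<m. l i \<noteq> 0) \<longrightarrow>
         (l \<in> L_X m C X \<longleftrightarrow>
            (\<forall>i. 2 \<le> i \<and> i < m \<longrightarrow>
               cols_dependent3 (transpose (C 0) *v l 0) (transpose (C 1) *v l 1) (transpose (C i) *v l i) \<and>
               cols_dependent3 (transpose (C 0) *v l 0) (transpose (C 2) *v l 2) (transpose (C i) *v l i)) \<and>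
            (\<forall>i<m. tdot (l i) (C i *v X) = 0)))" if g: "good m X u v R C" for C
    apply (intro conjI allI impI)
     apply (erule part1[OF g assms(1) assms(3)])
    apply (erule part2[OF g assms(1) assms(2)])
    done
  show ?thesis unfolding generic_arr_def
    by (rule exI[of _ Z]) (use Z P in blast)
qed


end
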